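(* Let $\Sigma\in\mathcal{G}_n$, $W=W(\Sigma)$, and let $Q_0$ be the unique regular rational orthogonal matrix with $Q_0^{\rm T}S(\Sigma)Q_0=S(\Sigma^{\rm T})$, with level $\ell_0$. Let $p$ be an odd prime with $p\nmid\ell_0$. If $z$ is an integral vector with $z\not\equiv0\pmod p$ and $W^{\rm T}z\equiv0\pmod p$, then $z^{\rm T}z\not\equiv0\pmod p$.
   Context: An oriented graph on vertices $v_1,\dots,v_n$ is a simple graph with each edge directed; its skew-adjacency matrix $S(\Sigma)=(s_{ij})$ has $s_{ij}=1$ if $(v_i,v_j)$ is an arc, $-1$ if $(v_j,v_i)$ is an arc, $0$ otherwise. The converse $\Sigma^{\rm T}$ reverses every arc, so $S(\Sigma^{\rm T})=-S(\Sigma)$. With $e$ the all-one vector, $W(\Sigma)=[e,Se,\dots,S^{n-1}e]$, $S=S(\Sigma)$. $\mathcal{G}_n$ is the set of $n$-vertex oriented graphs with $2^{-\lfloor n/2\rfloor}\det W(\Sigma)$ an odd square-free integer. A rational orthogonal matrix $Q$ is regular if $Qe=e$; its level is the least positive integer $k$ with $kQ$ integral. Since $\det W(\Sigma)\ne0$, $Q_0$ exists and is unique. *)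

theory Defs
  imports "Jordan_Normal_Form.Determinant" "HOL-Computational_Algebra.Squarefree"
          "HOL-Computational_Algebra.Primes"
begin

text \<open>An oriented graph on vertices 0,...,n-1 is given by its arc relation Arc:
  Arc i j means (v_i, v_j) is an arc.\<close>
definition oriented_graph :: "nat \<Rightarrow> (nat \<Rightarrow> nat \<Rightarrow> bool) \<Rightarrow> bool" where
  "oriented_graph n Arc \<longleftrightarrow>
     (\<forall>i<n. \<not> Arc i i) \<and> (\<forall>i<n. \<forall>j<n. \<not> (Arc i j \<and> Arc j i))"

definition skew_adj :: "nat \<Rightarrow> (nat \<Rightarrow> nat \<Rightarrow> bool) \<Rightarrow> int mat" where
  "skew_adj n Arc = mat n n (\<lambda>(i,j). if Arc i j then 1 else if Arc j i then -1 else 0)"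

definition converse_graph :: "(nat \<Rightarrow> nat \<Rightarrow> bool) \<Rightarrow> (nat \<Rightarrow> nat \<Rightarrow> bool)" where
  "converse_graph Arc = (\<lambda>i j. Arc j i)"

definition all_ones :: "nat \<Rightarrow> 'a :: one vec" where
  "all_ones n = vec n (\<lambda>_. 1)"

definition walk_matrix :: "nat \<Rightarrow> int mat \<Rightarrow> int mat" where
  "walk_matrix n S = mat n n (\<lambda>(i,k). ((S ^\<^sub>m k) *\<^sub>v all_ones n) $ i)"

definition W_of :: "nat \<Rightarrow> (nat \<Rightarrow> nat \<Rightarrow> bool) \<Rightarrow> int mat" where
  "W_of n Arc = walk_matrix n (skew_adj n Arc)"

definition in_G :: "nat \<Rightarrow> (nat \<Rightarrow> nat \<Rightarrow> bool) \<Rightarrow> bool" where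
  "in_G n Arc \<longleftrightarrow> oriented_graph n Arc \<and>
     (\<exists>m::int. det (W_of n Arc) = 2 ^ (n div 2) * m \<and> odd m \<and> squarefree m)"

definition regular_rat_orthogonal :: "nat \<Rightarrow> rat mat \<Rightarrow> bool" where
  "regular_rat_orthogonal n Q \<longleftrightarrow> Q \<in> carrier_mat n n \<and>
     transpose_mat Q * Q = 1\<^sub>m n \<and> Q *\<^sub>v all_ones n = all_ones n"

definition level :: "rat mat \<Rightarrow> nat" where
  "level Q = (LEAST k::nat. 0 < k \<and>
     (\<forall>i<dim_row Q. \<forall>j<dim_col Q. of_nat k * Q $$ (i,j) \<in> \<int>))"

end

theory Submission
  imports Defs
begin

lemma prod_two_dvd:
  fixes f :: "nat \<Rightarrow> int"
  assumes "finite A" "r1 \<in> A" "r2 \<in> A" "r1 \<noteq> r2" "q dvd f r1" "q dvd f r2"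
  shows "q^2 dvd prod f A"
proof -
  have "prod f A = f r1 * prod f (A - {r1})" using assms by (simp add: prod.remove)
  also have "prod f (A - {r1}) = f r2 * prod f (A - {r1} - {r2})"
    using assms by (intro prod.remove) auto
  finally have e: "prod f A = f r1 * (f r2 * prod f (A - {r1} - {r2}))" .
  from assms(5,6) obtain x y where "f r1 = q * x" "f r2 = q * y" by (auto elim!: dvdE)
  then show ?thesis unfolding e power2_eq_square by (simp add: mult.assoc mult.left_commute)
qed

lemma det_dvd_by_perm:
  fixes M :: "int mat"
  assumes M: "M \<in> carrier_mat n n"
    and h: "\<And>\<pi>. \<pi> permutes {0..<n} \<Longrightarrow> d dvd (\<Prod>i=0..<n. M $$ (i, \<pi> i))"
  shows "d dvd det M"
  unfolding det_def'[OF M]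
proof (rule dvd_sum)
  fix \<pi> assume "\<pi> \<in> {\<pi>. \<pi> permutes {0..<n}}"
  then have "d dvd (\<Prod>i=0..<n. M $$ (i, \<pi> i))" using h by blast
  then show "d dvd signof \<pi> * (\<Prod>i=0..<n. M $$ (i, \<pi> i))" by (rule dvd_mult)
qed

lemma perm_pre:
  fixes n c :: nat
  assumes "\<pi> permutes {0..<n}" "c < n"
  shows "inv_into UNIV \<pi> c < n" "\<pi> (inv_into UNIV \<pi> c) = c"
proof -
  have "inv_into UNIV \<pi> permutes {0..<n}" using assms(1) by (rule permutes_inv)
  then show "inv_into UNIV \<pi> c < n" using assms(2) permutes_in_image[of "inv_into UNIV \<pi>" "{0..<n}" c] by auto
  show "\<pi> (inv_into UNIV \<pi> c) = c" using assms(1) by (meson permutes_inverses(1))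
qed

lemma det_col_dvd:
  fixes M :: "int mat"
  assumes M: "M \<in> carrier_mat n n" and c: "c < n" and col: "\<And>r. r < n \<Longrightarrow> q dvd M $$ (r, c)"
  shows "q dvd det M"
proof (rule det_dvd_by_perm[OF M])
  fix \<pi> assume p: "\<pi> permutes {0..<n}"
  note pp = perm_pre[OF p c]
  have "q dvd M $$ (inv_into UNIV \<pi> c, \<pi> (inv_into UNIV \<pi> c))" using col pp by simp
  moreover have "M $$ (inv_into UNIV \<pi> c, \<pi> (inv_into UNIV \<pi> c)) dvd (\<Prod>i=0..<n. M $$ (i, \<pi> i))"
    by (rule dvd_prodI) (use pp(1) in simp_all)
  ultimately show "q dvd (\<Prod>i=0..<n. M $$ (i, \<pi> i))" by (rule dvd_trans)
qed

lemma det_two_col_dvd: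
  fixes M :: "int mat"
  assumes M: "M \<in> carrier_mat n n" and c: "c1 < n" "c2 < n" "c1 \<noteq> c2"
    and col1: "\<And>r. r < n \<Longrightarrow> q dvd M $$ (r, c1)"
    and col2: "\<And>r. r < n \<Longrightarrow> q dvd M $$ (r, c2)"
  shows "q^2 dvd det M"
proof (rule det_dvd_by_perm[OF M])
  fix \<pi> assume p: "\<pi> permutes {0..<n}"
  note p1 = perm_pre[OF p c(1)] and p2 = perm_pre[OF p c(2)]
  have ne: "inv_into UNIV \<pi> c1 \<noteq> inv_into UNIV \<pi> c2"
  proof
    assume "inv_into UNIV \<pi> c1 = inv_into UNIV \<pi> c2"
    then have "\<pi> (inv_into UNIV \<pi> c1) = \<pi> (inv_into UNIV \<pi> c2)" by simp
    then show False using p1(2) p2(2) c(3) by simp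
  qed
  have a1: "q dvd M $$ (inv_into UNIV \<pi> c1, \<pi> (inv_into UNIV \<pi> c1))" using col1 p1 by simp
  have a2: "q dvd M $$ (inv_into UNIV \<pi> c2, \<pi> (inv_into UNIV \<pi> c2))" using col2 p2 by simp
  show "q^2 dvd (\<Prod>i=0..<n. M $$ (i, \<pi> i))"
    by (rule prod_two_dvd[where f="\<lambda>i. M $$ (i, \<pi> i)" and A="{0..<n}", of "inv_into UNIV \<pi> c1" "inv_into UNIV \<pi> c2", OF _ _ _ ne a1 a2]) (use p1(1) p2(1) in simp_all)
qed

lemma det_rowcol_dvd:
  fixes M :: "int mat"
  assumes M: "M \<in> carrier_mat n n" and ij: "i < n" "j < n"
    and row: "\<And>c. c < n \<Longrightarrow> q dvd M $$ (j, c)"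
    and col: "\<And>r. r < n \<Longrightarrow> q dvd M $$ (r, i)"
    and corner: "q^2 dvd M $$ (j, i)"
  shows "q^2 dvd det M"
proof (rule det_dvd_by_perm[OF M])
  fix \<pi> assume p: "\<pi> permutes {0..<n}"
  note p1 = perm_pre[OF p ij(1)]
  show "q^2 dvd (\<Prod>i=0..<n. M $$ (i, \<pi> i))"
  proof (cases "\<pi> j = i")
    case True
    have "q^2 dvd M $$ (j, \<pi> j)" using True corner by simp
    moreover have "M $$ (j, \<pi> j) dvd (\<Prod>i=0..<n. M $$ (i, \<pi> i))"
      by (rule dvd_prodI) (use ij in auto)
    ultimately show ?thesis by (rule dvd_trans)
  next
    case False
    have ne: "j \<noteq> inv_into UNIV \<pi> i"
    proof
      assume "j = inv_into UNIV \<pi> i"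
      then have "\<pi> j = i" using p1(2) by simp
      then show False using False by simp
    qed
    have pj: "\<pi> j < n" using permutes_in_image[OF p, of j] ij by simp
    have a1: "q dvd M $$ (j, \<pi> j)" using row pj by blast
    have a2: "q dvd M $$ (inv_into UNIV \<pi> i, \<pi> (inv_into UNIV \<pi> i))" using col p1 by simp
    show ?thesis
      by (rule prod_two_dvd[where f="\<lambda>i. M $$ (i, \<pi> i)" and A="{0..<n}", of "j" "inv_into UNIV \<pi> i", OF _ _ _ ne a1 a2]) (use p1(1) ij in simp_all)
  qed
qed

lemma sq_dvd_cancel:
  fixes q x y :: int
  assumes q: "prime q" and nx: "\<not> q dvd x" and d: "q^2 dvd x * y"
  shows "q^2 dvd y"
proof -
  have "coprime q x" using q nx by (simp add: prime_imp_coprime)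
  then have "coprime (q^2) x" by simp
  then show ?thesis using d by (simp add: coprime_dvd_mult_right_iff)
qed

lemma mult_vec_lincomb:
  fixes M :: "int mat"
  assumes M: "M \<in> carrier_mat n n" and v: "v \<in> carrier_vec n" and w: "w \<in> carrier_vec n" and r: "r < n"
  shows "(M *\<^sub>v (x \<cdot>\<^sub>v v - y \<cdot>\<^sub>v w)) $ r = x * (M *\<^sub>v v) $ r - y * (M *\<^sub>v w) $ r"
proof -
  have "(M *\<^sub>v (x \<cdot>\<^sub>v v - y \<cdot>\<^sub>v w)) $ r = (\<Sum>k=0..<n. M $$ (r,k) * (x * v $ k - y * w $ k))"
    using M v w r by (simp add: scalar_prod_def)
  also have "\<dots> = x * (\<Sum>k=0..<n. M $$ (r,k) * v $ k) - y * (\<Sum>k=0..<n. M $$ (r,k) * w $ k)"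
    by (simp add: sum_distrib_left sum_subtractf algebra_simps)
  also have "\<dots> = x * (M *\<^sub>v v) $ r - y * (M *\<^sub>v w) $ r"
    using M v w r by (simp add: scalar_prod_def)
  finally show ?thesis .
qed

lemma kernel_minor_core:
  fixes M :: "int mat" and a b :: "int vec" and q :: int
  assumes M: "M \<in> carrier_mat n n" and a: "a \<in> carrier_vec n" and b: "b \<in> carrier_vec n"
    and q: "prime q" and ndet: "\<not> q^2 dvd det M"
    and Ma: "\<forall>k<n. q dvd (M *\<^sub>v a) $ k" and Mb: "\<forall>k<n. q dvd (M *\<^sub>v b) $ k"
    and ij: "i < n" "j < n" "i \<noteq> j" and ai: "\<not> q dvd a $ i"
  shows "q dvd a $ i * b $ j - a $ j * b $ i"
proof (rule ccontr)
  assume nd: "\<not> ?thesis"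
  define c where "c = a $ i \<cdot>\<^sub>v b - b $ i \<cdot>\<^sub>v a"
  have c: "c \<in> carrier_vec n" using a b by (simp add: c_def)
  have ci: "c $ i = 0" using a b ij by (simp add: c_def)
  have cj: "c $ j = a $ i * b $ j - a $ j * b $ i" using a b ij by (simp add: c_def algebra_simps)
  define M1 where "M1 = replace_col M (M *\<^sub>v a) i"
  have M1: "M1 \<in> carrier_mat n n" using M by (simp add: M1_def replace_col_def)
  have d1: "det M1 = a $ i * det M" unfolding M1_def by (rule cramer_lemma_mat[OF M a ij(1)])
  have M1c: "M1 *\<^sub>v c = M *\<^sub>v c"
  proof (rule eq_vecI)
    fix r assume r: "r < dim_vec (M *\<^sub>v c)"
    then have r: "r < n" using M by simp
    have "(M1 *\<^sub>v c) $ r = (\<Sum>k=0..<n. M1 $$ (r,k) * c $ k)"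
      using M1 c r by (simp add: scalar_prod_def)
    also have "\<dots> = (\<Sum>k=0..<n. M $$ (r,k) * c $ k)"
      by (rule sum.cong) (use M r ci in \<open>auto simp: M1_def replace_col_def\<close>)
    also have "\<dots> = (M *\<^sub>v c) $ r" using M c r by (simp add: scalar_prod_def)
    finally show "(M1 *\<^sub>v c) $ r = (M *\<^sub>v c) $ r" .
  qed (use M M1 in simp)
  define M2 where "M2 = replace_col M1 (M1 *\<^sub>v c) j"
  have M2: "M2 \<in> carrier_mat n n" using M1 by (simp add: M2_def replace_col_def)
  have d2: "det M2 = c $ j * det M1" unfolding M2_def by (rule cramer_lemma_mat[OF M1 c ij(2)])
  have "q^2 dvd det M2"
  proof (rule det_two_col_dvd[OF M2 ij])
    fix r assume r: "r < n"
    have "M2 $$ (r, i) = (M *\<^sub>v a) $ r" using r ij M M1 by (simp add: M2_def M1_def replace_col_def)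
    then show "q dvd M2 $$ (r, i)" using Ma r by simp
    have "M2 $$ (r, j) = (M *\<^sub>v c) $ r" using r ij M M1 M1c by (simp add: M2_def replace_col_def)
    also have "\<dots> = a $ i * (M *\<^sub>v b) $ r - b $ i * (M *\<^sub>v a) $ r"
      unfolding c_def by (rule mult_vec_lincomb[OF M b a r])
    finally show "q dvd M2 $$ (r, j)" using Ma Mb r by simp
  qed
  then have "q^2 dvd (c $ j * a $ i) * det M" using d1 d2 by (simp add: mult.assoc)
  moreover have "\<not> q dvd c $ j * a $ i" using nd ai q cj by (simp add: prime_dvd_mult_iff)
  ultimately have "q^2 dvd det M" using sq_dvd_cancel[OF q] by blast
  with ndet show False by simp
qed

lemma kernel_minor:
  fixes M :: "int mat" and a b :: "int vec" and q :: int
  assumes M: "M \<in> carrier_mat n n" and a: "a \<in> carrier_vec n" and b: "b \<in> carrier_vec n"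
    and q: "prime q" and ndet: "\<not> q^2 dvd det M"
    and Ma: "\<forall>k<n. q dvd (M *\<^sub>v a) $ k" and Mb: "\<forall>k<n. q dvd (M *\<^sub>v b) $ k"
    and ij: "i < n" "j < n"
  shows "q dvd a $ i * b $ j - a $ j * b $ i"
proof (cases "i = j")
  case True then show ?thesis by simp
next
  case False
  show ?thesis
  proof (cases "q dvd a $ i")
    case False': False
    show ?thesis by (rule kernel_minor_core[OF M a b q ndet Ma Mb ij \<open>i \<noteq> j\<close> False'])
  next
    case True
    show ?thesis
    proof (cases "q dvd a $ j")
      case True': True
      then show ?thesis using True by simp
    next
      case False'': False
      have "q dvd a $ j * b $ i - a $ i * b $ j"
        by (rule kernel_minor_core[OF M a b q ndet Ma Mb ij(2,1)]) (use False False'' in auto)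
      then have "q dvd - (a $ j * b $ i - a $ i * b $ j)" by (simp only: dvd_minus_iff)
      then show ?thesis by (simp add: algebra_simps)
    qed
  qed
qed

lemma left_right_kernel:
  fixes W :: "int mat" and a b :: "int vec" and q :: int
  assumes W: "W \<in> carrier_mat n n" and a: "a \<in> carrier_vec n" and b: "b \<in> carrier_vec n"
    and q: "prime q"
    and La: "\<forall>k<n. q dvd (transpose_mat W *\<^sub>v a) $ k" and Rb: "\<forall>k<n. q dvd (W *\<^sub>v b) $ k"
    and ij: "i < n" "j < n" and ai: "\<not> q dvd a $ i" and bj: "\<not> q dvd b $ j"
    and cor: "q^2 dvd a \<bullet> (W *\<^sub>v b)"
  shows "q^2 dvd det W"
proof -
  define W1 where "W1 = replace_col W (W *\<^sub>v b) j"
  have W1: "W1 \<in> carrier_mat n n" using W by (simp add: W1_def replace_col_def)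
  have d1: "det W1 = b $ j * det W" unfolding W1_def by (rule cramer_lemma_mat[OF W b ij(2)])
  define M where "M = transpose_mat W1"
  have Mc: "M \<in> carrier_mat n n" using W1 by (simp add: M_def)
  have dM: "det M = det W1" unfolding M_def by (rule det_transpose[OF W1])
  define M2 where "M2 = replace_col M (M *\<^sub>v a) i"
  have M2: "M2 \<in> carrier_mat n n" using Mc by (simp add: M2_def replace_col_def)
  have d2: "det M2 = a $ i * det M" unfolding M2_def by (rule cramer_lemma_mat[OF Mc a ij(1)])
  have key: "(M *\<^sub>v a) $ r = (if r = j then a \<bullet> (W *\<^sub>v b) else (transpose_mat W *\<^sub>v a) $ r)"
    if r: "r < n" for r
  proof -
    have "(M *\<^sub>v a) $ r = (\<Sum>k=0..<n. W1 $$ (k, r) * a $ k)"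
      using Mc W1 a r by (simp add: M_def scalar_prod_def)
    also have "\<dots> = (if r = j then (\<Sum>k=0..<n. (W *\<^sub>v b) $ k * a $ k) else (\<Sum>k=0..<n. W $$ (k, r) * a $ k))"
      using W r by (auto simp: W1_def replace_col_def intro: sum.cong)
    also have "\<dots> = (if r = j then a \<bullet> (W *\<^sub>v b) else (transpose_mat W *\<^sub>v a) $ r)"
      using W a b r by (auto simp: scalar_prod_def mult.commute intro: sum.cong)
    finally show ?thesis .
  qed
  have "q^2 dvd det M2"
  proof (rule det_rowcol_dvd[OF M2 ij])
    fix c assume c: "c < n"
    show "q dvd M2 $$ (j, c)"
    proof (cases "c = i")
      case True
      have "M2 $$ (j, c) = a \<bullet> (W *\<^sub>v b)" using True c ij Mc key[OF ij(2)] by (simp add: M2_def replace_col_def)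
      then show ?thesis using cor by (metis dvd_power dvd_trans zero_less_numeral)
    next
      case False
      have "M2 $$ (j, c) = (W *\<^sub>v b) $ c" using False c ij Mc W b
        by (simp add: M2_def replace_col_def M_def W1_def)
      then show ?thesis using Rb c by simp
    qed
  next
    fix r assume r: "r < n"
    show "q dvd M2 $$ (r, i)"
    proof (cases "r = j")
      case True
      have "M2 $$ (r, i) = a \<bullet> (W *\<^sub>v b)" using True r ij Mc key[OF r] by (simp add: M2_def replace_col_def)
      then show ?thesis using cor by (metis dvd_power dvd_trans zero_less_numeral)
    next
      case False
      have "M2 $$ (r, i) = (transpose_mat W *\<^sub>v a) $ r" using False r ij Mc key[OF r]
        by (simp add: M2_def replace_col_def)
      then show ?thesis using La r by simp
    qed
  next
    show "q^2 dvd M2 $$ (j, i)" using ij Mc key[OF ij(2)] cor by (simp add: M2_def replace_col_def)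
  qed
  then have "q^2 dvd (a $ i * b $ j) * det W" using d1 d2 dM by (simp add: mult.assoc)
  moreover have "\<not> q dvd a $ i * b $ j" using ai bj q by (simp add: prime_dvd_mult_iff)
  ultimately show "q^2 dvd det W" using sq_dvd_cancel[OF q] by blast
qed

lemma mv_smult_idx:
  fixes M :: "'a :: comm_ring_1 mat"
  assumes M: "M \<in> carrier_mat n n" and v: "v \<in> carrier_vec n" and r: "r < n"
  shows "(M *\<^sub>v (c \<cdot>\<^sub>v v)) $ r = c * (M *\<^sub>v v) $ r"
  using M v r by (simp add: scalar_prod_def sum_distrib_left algebra_simps)

lemma cong_mult:
  fixes M :: "int mat"
  assumes M: "M \<in> carrier_mat n n" and v: "v \<in> carrier_vec n" and w: "w \<in> carrier_vec n"
    and c: "\<forall>i<n. q dvd v $ i - w $ i" and r: "r < n"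
  shows "q dvd (M *\<^sub>v v) $ r - (M *\<^sub>v w) $ r"
proof -
  have "(M *\<^sub>v v) $ r - (M *\<^sub>v w) $ r = (\<Sum>k=0..<n. M $$ (r,k) * (v $ k - w $ k))"
    using M v w r by (simp add: scalar_prod_def sum_subtractf algebra_simps)
  also have "q dvd \<dots>"
  proof (rule dvd_sum)
    fix k assume "k \<in> {0..<n}"
    then have "q dvd v $ k - w $ k" using c by simp
    then show "q dvd M $$ (r,k) * (v $ k - w $ k)" by (rule dvd_mult)
  qed
  finally show ?thesis .
qed

lemma zero_mult:
  fixes M :: "int mat"
  assumes M: "M \<in> carrier_mat n n" and v: "v \<in> carrier_vec n"
    and c: "\<forall>i<n. q dvd v $ i" and r: "r < n"
  shows "q dvd (M *\<^sub>v v) $ r"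
proof -
  have "(M *\<^sub>v v) $ r = (\<Sum>k=0..<n. M $$ (r,k) * v $ k)"
    using M v r by (simp add: scalar_prod_def)
  also have "q dvd \<dots>"
  proof (rule dvd_sum)
    fix k assume "k \<in> {0..<n}"
    then have "q dvd v $ k" using c by simp
    then show "q dvd M $$ (r,k) * v $ k" by (rule dvd_mult)
  qed
  finally show ?thesis .
qed

lemma dvd_scalar:
  fixes v w :: "int vec"
  assumes v: "v \<in> carrier_vec n" and w: "w \<in> carrier_vec n" and c: "\<forall>i<n. q dvd v $ i"
  shows "q dvd v \<bullet> w"
  unfolding scalar_prod_def
proof (rule dvd_sum)
  fix k assume "k \<in> {0..<dim_vec w}"
  then have "q dvd v $ k" using c w by simp
  then show "q dvd v $ k * w $ k" by (rule dvd_mult2)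
qed

lemma skew_scalar:
  fixes S :: "'a :: comm_ring_1 mat"
  assumes S: "S \<in> carrier_mat n n" and sk: "\<And>i j. i < n \<Longrightarrow> j < n \<Longrightarrow> S $$ (j,i) = - S $$ (i,j)"
    and x: "x \<in> carrier_vec n" and y: "y \<in> carrier_vec n"
  shows "(S *\<^sub>v x) \<bullet> y = - (x \<bullet> (S *\<^sub>v y))"
proof -
  have 1: "(S *\<^sub>v x) \<bullet> y = (\<Sum>i=0..<n. \<Sum>j=0..<n. S $$ (i,j) * x $ j * y $ i)"
    using S x y by (simp add: scalar_prod_def sum_distrib_right)
  have "x \<bullet> (S *\<^sub>v y) = (\<Sum>j=0..<n. \<Sum>i=0..<n. x $ j * (S $$ (j,i) * y $ i))"
    using S x y by (simp add: scalar_prod_def sum_distrib_left)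
  also have "\<dots> = (\<Sum>j=0..<n. \<Sum>i=0..<n. - (S $$ (i,j) * x $ j * y $ i))"
  proof (intro sum.cong refl)
    fix j i assume j: "j \<in> {0..<n}" and i: "i \<in> {0..<n}"
    have "S $$ (j,i) = - S $$ (i,j)" by (rule sk) (use i j in auto)
    then show "x $ j * (S $$ (j,i) * y $ i) = - (S $$ (i,j) * x $ j * y $ i)" by (simp add: algebra_simps)
  qed
  also have "\<dots> = - (\<Sum>i=0..<n. \<Sum>j=0..<n. S $$ (i,j) * x $ j * y $ i)"
    by (subst sum.swap) (simp add: sum_negf)
  finally show ?thesis using 1 by simp
qed

lemma skew_self:
  fixes S :: "int mat"
  assumes S: "S \<in> carrier_mat n n" and sk: "\<And>i j. i < n \<Longrightarrow> j < n \<Longrightarrow> S $$ (j,i) = - S $$ (i,j)"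
    and x: "x \<in> carrier_vec n"
  shows "(S *\<^sub>v x) \<bullet> x = 0"
proof -
  have "(S *\<^sub>v x) \<bullet> x = - (x \<bullet> (S *\<^sub>v x))" by (rule skew_scalar[OF S sk x x])
  moreover have "x \<bullet> (S *\<^sub>v x) = (S *\<^sub>v x) \<bullet> x" using S x by (intro comm_scalar_prod) auto
  ultimately show ?thesis by simp
qed

lemma skew_adj_carrier: "skew_adj n Arc \<in> carrier_mat n n"
  by (simp add: skew_adj_def)

lemma skew_adj_skew:
  assumes "oriented_graph n Arc" "i < n" "j < n"
  shows "skew_adj n Arc $$ (j,i) = - skew_adj n Arc $$ (i,j)"
  using assms unfolding oriented_graph_def skew_adj_def by auto

lemma skew_adj_conv:
  assumes "oriented_graph n Arc" "i < n" "j < n"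
  shows "skew_adj n (converse_graph Arc) $$ (i,j) = - skew_adj n Arc $$ (i,j)"
  using assms unfolding oriented_graph_def skew_adj_def converse_graph_def by auto

lemma pow_mat_Suc_left:
  fixes A :: "'a :: semiring_1 mat"
  assumes A: "A \<in> carrier_mat n n"
  shows "A ^\<^sub>m Suc k = A * A ^\<^sub>m k"
proof (induct k)
  case 0 then show ?case using A by simp
next
  case (Suc k)
  have "A ^\<^sub>m Suc (Suc k) = (A * A ^\<^sub>m k) * A" using Suc by simp
  also have "\<dots> = A * (A ^\<^sub>m k * A)" using A by (intro assoc_mult_mat) auto
  finally show ?case by simp
qed

lemma pow_vec_Suc:
  fixes A :: "'a :: semiring_1 mat"
  assumes A: "A \<in> carrier_mat n n" and v: "v \<in> carrier_vec n"
  shows "(A ^\<^sub>m Suc k) *\<^sub>v v = A *\<^sub>v ((A ^\<^sub>m k) *\<^sub>v v)"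
  by (subst pow_mat_Suc_left[OF A]) (rule assoc_mult_mat_vec, use A v in auto)

lemma walk_carrier: "walk_matrix n S \<in> carrier_mat n n"
  by (simp add: walk_matrix_def)

lemma walk_idx: "i < n \<Longrightarrow> k < n \<Longrightarrow> walk_matrix n S $$ (i,k) = ((S ^\<^sub>m k) *\<^sub>v all_ones n) $ i"
  by (simp add: walk_matrix_def)

lemma walk_T:
  fixes S :: "int mat"
  assumes S: "S \<in> carrier_mat n n" and v: "v \<in> carrier_vec n" and k: "k < n"
  shows "(transpose_mat (walk_matrix n S) *\<^sub>v v) $ k = ((S ^\<^sub>m k) *\<^sub>v all_ones n) \<bullet> v"
  using S v k by (simp add: walk_matrix_def scalar_prod_def all_ones_def)

lemma walk_v:
  fixes S :: "int mat"
  assumes S: "S \<in> carrier_mat n n" and v: "v \<in> carrier_vec n" and r: "r < n"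
  shows "(walk_matrix n S *\<^sub>v v) $ r = (\<Sum>k=0..<n. ((S ^\<^sub>m k) *\<^sub>v all_ones n) $ r * v $ k)"
  using S v r by (simp add: walk_matrix_def scalar_prod_def all_ones_def)

lemma walk_shift:
  fixes S :: "int mat"
  assumes S: "S \<in> carrier_mat n n" and v: "v \<in> carrier_vec n" and n: "n > 0"
    and last: "v $ (n - 1) = 0"
  shows "walk_matrix n S *\<^sub>v vec n (\<lambda>i. if i = 0 then 0 else v $ (i - 1))
         = S *\<^sub>v (walk_matrix n S *\<^sub>v v)"
proof (rule eq_vecI)
  define E where "E = (\<lambda>k. (S ^\<^sub>m k) *\<^sub>v (all_ones n :: int vec))"
  have Ec: "E k \<in> carrier_vec n" for k using S unfolding E_def carrier_vec_def by simp
  obtain m where nm: "n = Suc m" using n by (cases n) auto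
  fix r assume "r < dim_vec (S *\<^sub>v (walk_matrix n S *\<^sub>v v))"
  then have r: "r < n" using S by simp
  have "(walk_matrix n S *\<^sub>v vec n (\<lambda>i. if i = 0 then 0 else v $ (i - 1))) $ r
      = (\<Sum>k<Suc m. E k $ r * (if k = 0 then 0 else v $ (k - 1)))"
    using walk_v[OF S _ r, of "vec n (\<lambda>i. if i = 0 then 0 else v $ (i - 1))"] nm
    by (simp add: E_def atLeast0LessThan)
  also have "\<dots> = (\<Sum>k<m. E (Suc k) $ r * v $ k)"
    by (subst sum.lessThan_Suc_shift) simp
  finally have L: "(walk_matrix n S *\<^sub>v vec n (\<lambda>i. if i = 0 then 0 else v $ (i - 1))) $ r
      = (\<Sum>k<m. E (Suc k) $ r * v $ k)" .
  have "(S *\<^sub>v (walk_matrix n S *\<^sub>v v)) $ r = (\<Sum>c=0..<n. S $$ (r,c) * (walk_matrix n S *\<^sub>v v) $ c)"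
    using S r by (simp add: scalar_prod_def walk_matrix_def)
  also have "\<dots> = (\<Sum>c=0..<n. S $$ (r,c) * (\<Sum>k=0..<n. E k $ c * v $ k))"
    by (intro sum.cong refl) (simp add: walk_v[OF S v] E_def)
  also have "\<dots> = (\<Sum>c=0..<n. \<Sum>k=0..<n. S $$ (r,c) * (E k $ c * v $ k))"
    by (simp only: sum_distrib_left)
  also have "\<dots> = (\<Sum>k=0..<n. \<Sum>c=0..<n. S $$ (r,c) * (E k $ c * v $ k))"
    by (rule sum.swap)
  also have "\<dots> = (\<Sum>k=0..<n. (\<Sum>c=0..<n. S $$ (r,c) * E k $ c) * v $ k)"
    by (simp only: sum_distrib_right mult.assoc)
  also have "\<dots> = (\<Sum>k=0..<n. E (Suc k) $ r * v $ k)"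
  proof (intro sum.cong refl)
    fix k
    have "E (Suc k) = S *\<^sub>v E k" unfolding E_def by (rule pow_vec_Suc[OF S]) (simp add: all_ones_def)
    then have "E (Suc k) $ r = (\<Sum>c=0..<n. S $$ (r,c) * E k $ c)"
      using S r Ec[of k] by (simp add: scalar_prod_def)
    then show "(\<Sum>c=0..<n. S $$ (r,c) * E k $ c) * v $ k = E (Suc k) $ r * v $ k" by simp
  qed
  also have "\<dots> = (\<Sum>k<Suc m. E (Suc k) $ r * v $ k)"
    using nm by (simp only: atLeast0LessThan)
  also have "\<dots> = (\<Sum>k<m. E (Suc k) $ r * v $ k) + E (Suc m) $ r * v $ m"
    by (rule sum.lessThan_Suc)
  also have "v $ m = 0" using last nm by simp
  also have "(\<Sum>k<m. E (Suc k) $ r * v $ k) + E (Suc m) $ r * 0 = (\<Sum>k<m. E (Suc k) $ r * v $ k)"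
    by simp
  finally show "(walk_matrix n S *\<^sub>v vec n (\<lambda>i. if i = 0 then 0 else v $ (i - 1))) $ r
      = (S *\<^sub>v (walk_matrix n S *\<^sub>v v)) $ r" using L by simp
qed (use S in \<open>simp add: walk_matrix_def\<close>)

lemma level_ok:
  assumes Q: "Q \<in> carrier_mat n n"
  shows "0 < level Q \<and> (\<forall>i<n. \<forall>j<n. of_nat (level Q) * Q $$ (i,j) \<in> \<int>)"
proof -
  define den where "den = (\<lambda>x::rat. nat (snd (quotient_of x)))"
  have den_pos: "den x > 0" for x
    unfolding den_def using quotient_of_denom_pos' by (simp add: zless_nat_eq_int_zless)
  have den_int: "of_nat (den x) * x \<in> \<int>" for x
  proof -
    obtain a d where qd: "quotient_of x = (a, d)" by (cases "quotient_of x")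
    have d: "d > 0" using quotient_of_denom_pos[OF qd] .
    have x: "x = of_int a / of_int d" by (rule quotient_of_div[OF qd])
    have "of_nat (den x) = (of_int d :: rat)" using d qd by (simp add: den_def)
    then have "of_nat (den x) * x = of_int a" using d x by simp
    then show ?thesis by simp
  qed
  define K where "K = (\<Prod>ij\<in>{0..<n}\<times>{0..<n}. den (Q $$ ij))"
  have K0: "0 < K" unfolding K_def using den_pos by (intro prod_pos) auto
  have KI: "of_nat K * Q $$ (i,j) \<in> \<int>" if "i < n" "j < n" for i j
  proof -
    have "den (Q $$ (i,j)) dvd K" unfolding K_def by (rule dvd_prodI) (use that in auto)
    then obtain c where "K = den (Q $$ (i,j)) * c" by (auto elim!: dvdE)
    then have "of_nat K * Q $$ (i,j) = of_nat c * (of_nat (den (Q $$ (i,j))) * Q $$ (i,j))" by simp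
    also have "\<dots> \<in> \<int>" by (rule Ints_mult[OF Ints_of_nat den_int])
    finally show ?thesis .
  qed
  have ex: "\<exists>k::nat. 0 < k \<and> (\<forall>i<dim_row Q. \<forall>j<dim_col Q. of_nat k * Q $$ (i,j) \<in> \<int>)"
    using K0 KI Q by auto
  have "0 < level Q \<and> (\<forall>i<dim_row Q. \<forall>j<dim_col Q. of_nat (level Q) * Q $$ (i,j) \<in> \<int>)"
    unfolding level_def by (rule LeastI_ex[OF ex])
  then show ?thesis using Q by auto
qed

lemma mv_uminus:
  fixes A :: "'a :: comm_ring_1 mat"
  assumes A: "A \<in> carrier_mat n n" and w: "w \<in> carrier_vec n"
  shows "A *\<^sub>v (- w) = - (A *\<^sub>v w)"
  by (rule eq_vecI) (use A w in auto)

lemma anti_pow: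
  fixes P R :: "rat mat" and e :: "rat vec"
  assumes P: "P \<in> carrier_mat n n" and R: "R \<in> carrier_mat n n" and e: "e \<in> carrier_vec n"
    and anti: "\<And>v. v \<in> carrier_vec n \<Longrightarrow> P *\<^sub>v (R *\<^sub>v v) = - (R *\<^sub>v (P *\<^sub>v v))"
    and Pe: "P *\<^sub>v e = e"
  shows "P *\<^sub>v ((R ^\<^sub>m k) *\<^sub>v e) = (-1)^k \<cdot>\<^sub>v ((R ^\<^sub>m k) *\<^sub>v e)"
proof (induct k)
  case 0 then show ?case using R e Pe by simp
next
  case (Suc k)
  have c: "(R ^\<^sub>m k) *\<^sub>v e \<in> carrier_vec n" by (rule carrier_vecI) (use R in simp)
  have "P *\<^sub>v ((R ^\<^sub>m Suc k) *\<^sub>v e) = P *\<^sub>v (R *\<^sub>v ((R ^\<^sub>m k) *\<^sub>v e))"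
    by (simp only: pow_vec_Suc[OF R e])
  also have "\<dots> = - (R *\<^sub>v (P *\<^sub>v ((R ^\<^sub>m k) *\<^sub>v e)))" by (rule anti[OF c])
  also have "\<dots> = - (R *\<^sub>v ((-1)^k \<cdot>\<^sub>v ((R ^\<^sub>m k) *\<^sub>v e)))" by (simp only: Suc)
  also have "\<dots> = - ((-1)^k \<cdot>\<^sub>v (R *\<^sub>v ((R ^\<^sub>m k) *\<^sub>v e)))" by (simp only: mult_mat_vec[OF R c])
  also have "\<dots> = (-1)^Suc k \<cdot>\<^sub>v (R *\<^sub>v ((R ^\<^sub>m k) *\<^sub>v e))"
    by (rule eq_vecI) (use R c in auto)
  also have "\<dots> = (-1)^Suc k \<cdot>\<^sub>v ((R ^\<^sub>m Suc k) *\<^sub>v e)"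
    by (simp only: pow_vec_Suc[OF R e])
  finally show ?case .
qed

lemma Q0_facts:
  fixes Q0 :: "rat mat"
  assumes og: "oriented_graph n Arc"
    and Q0: "regular_rat_orthogonal n Q0"
    and conj: "transpose_mat Q0 * map_mat of_int (skew_adj n Arc) * Q0
                  = map_mat of_int (skew_adj n (converse_graph Arc))"
  shows "\<And>k. Q0 *\<^sub>v ((map_mat of_int (skew_adj n Arc) ^\<^sub>m k) *\<^sub>v all_ones n)
            = (-1)^k \<cdot>\<^sub>v ((map_mat of_int (skew_adj n Arc) ^\<^sub>m k) *\<^sub>v all_ones n)"
    "\<And>k. transpose_mat Q0 *\<^sub>v ((map_mat of_int (skew_adj n Arc) ^\<^sub>m k) *\<^sub>v all_ones n)
            = (-1)^k \<cdot>\<^sub>v ((map_mat of_int (skew_adj n Arc) ^\<^sub>m k) *\<^sub>v all_ones n)"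
    "\<And>v. v \<in> carrier_vec n \<Longrightarrow> Q0 *\<^sub>v (map_mat of_int (skew_adj n Arc) *\<^sub>v v)
            = - (map_mat of_int (skew_adj n Arc) *\<^sub>v (Q0 *\<^sub>v v))"
proof -
  define R where "R = map_mat (of_int :: int \<Rightarrow> rat) (skew_adj n Arc)"
  define QT where "QT = transpose_mat Q0"
  define e where "e = (all_ones n :: rat vec)"
  have Rc: "R \<in> carrier_mat n n" unfolding R_def by (simp add: skew_adj_def)
  have Qc: "Q0 \<in> carrier_mat n n" using Q0 unfolding regular_rat_orthogonal_def by simp
  have QTc: "QT \<in> carrier_mat n n" using Qc unfolding QT_def by simp
  have ec: "e \<in> carrier_vec n" unfolding e_def all_ones_def by simp
  have QTQ: "QT * Q0 = 1\<^sub>m n" using Q0 unfolding regular_rat_orthogonal_def QT_def by simp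
  have Qe: "Q0 *\<^sub>v e = e" using Q0 unfolding regular_rat_orthogonal_def e_def by simp
  have QQT: "Q0 * QT = 1\<^sub>m n" by (rule mat_mult_left_right_inverse[OF QTc Qc QTQ])
  have conjR: "QT * R * Q0 = - R"
  proof (rule eq_matI)
    fix i j assume ij: "i < dim_row (- R)" "j < dim_col (- R)"
    then have ij': "i < n" "j < n" using Rc by auto
    have "(QT * R * Q0) $$ (i,j) = map_mat of_int (skew_adj n (converse_graph Arc)) $$ (i,j)"
      using conj unfolding QT_def R_def by simp
    also have "\<dots> = - R $$ (i,j)" using skew_adj_conv[OF og ij'] ij' unfolding R_def
      by (simp add: skew_adj_def)
    finally show "(QT * R * Q0) $$ (i,j) = (- R) $$ (i,j)" using ij Rc by simp
  qed (use QTc Rc Qc in auto)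
  have QQTv: "Q0 *\<^sub>v (QT *\<^sub>v w) = w" if "w \<in> carrier_vec n" for w
  proof -
    have "Q0 *\<^sub>v (QT *\<^sub>v w) = (Q0 * QT) *\<^sub>v w" using Qc QTc that by simp
    then show ?thesis using QQT that by simp
  qed
  have QTQv: "QT *\<^sub>v (Q0 *\<^sub>v w) = w" if "w \<in> carrier_vec n" for w
  proof -
    have "QT *\<^sub>v (Q0 *\<^sub>v w) = (QT * Q0) *\<^sub>v w" using Qc QTc that by simp
    then show ?thesis using QTQ that by simp
  qed
  have key: "QT *\<^sub>v (R *\<^sub>v (Q0 *\<^sub>v v)) = - (R *\<^sub>v v)" if v: "v \<in> carrier_vec n" for v
  proof -
    have "(QT * R * Q0) *\<^sub>v v = (QT * R) *\<^sub>v (Q0 *\<^sub>v v)"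
      by (rule assoc_mult_mat_vec) (use QTc Rc Qc v in auto)
    also have "\<dots> = QT *\<^sub>v (R *\<^sub>v (Q0 *\<^sub>v v))"
      by (rule assoc_mult_mat_vec) (use QTc Rc Qc v in auto)
    finally have "QT *\<^sub>v (R *\<^sub>v (Q0 *\<^sub>v v)) = (QT * R * Q0) *\<^sub>v v" by simp
    also have "\<dots> = - (R *\<^sub>v v)" using conjR Rc v by simp
    finally show ?thesis .
  qed
  have RQ: "Q0 *\<^sub>v (R *\<^sub>v v) = - (R *\<^sub>v (Q0 *\<^sub>v v))" if v: "v \<in> carrier_vec n" for v
  proof -
    have c1: "R *\<^sub>v (Q0 *\<^sub>v v) \<in> carrier_vec n" using Rc Qc v by simp
    have "R *\<^sub>v (Q0 *\<^sub>v v) = Q0 *\<^sub>v (QT *\<^sub>v (R *\<^sub>v (Q0 *\<^sub>v v)))" using QQTv[OF c1] by simp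
    also have "\<dots> = Q0 *\<^sub>v (- (R *\<^sub>v v))" using key[OF v] by simp
    also have "\<dots> = - (Q0 *\<^sub>v (R *\<^sub>v v))" using mv_uminus[OF Qc, of "R *\<^sub>v v"] Rc v by simp
    finally show ?thesis by simp
  qed
  have RQT: "QT *\<^sub>v (R *\<^sub>v v) = - (R *\<^sub>v (QT *\<^sub>v v))" if v: "v \<in> carrier_vec n" for v
  proof -
    have u: "QT *\<^sub>v v \<in> carrier_vec n" using QTc v by simp
    have "QT *\<^sub>v (R *\<^sub>v v) = QT *\<^sub>v (R *\<^sub>v (Q0 *\<^sub>v (QT *\<^sub>v v)))" using QQTv[OF v] by simp
    also have "\<dots> = - (R *\<^sub>v (QT *\<^sub>v v))" by (rule key[OF u])
    finally show ?thesis .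
  qed
  have QTe: "QT *\<^sub>v e = e" using QTQv[OF ec] Qe by simp
  show "Q0 *\<^sub>v ((map_mat of_int (skew_adj n Arc) ^\<^sub>m k) *\<^sub>v all_ones n)
            = (-1)^k \<cdot>\<^sub>v ((map_mat of_int (skew_adj n Arc) ^\<^sub>m k) *\<^sub>v all_ones n)" for k
    by (rule anti_pow[OF Qc Rc ec RQ Qe, unfolded R_def e_def])
  show "transpose_mat Q0 *\<^sub>v ((map_mat of_int (skew_adj n Arc) ^\<^sub>m k) *\<^sub>v all_ones n)
            = (-1)^k \<cdot>\<^sub>v ((map_mat of_int (skew_adj n Arc) ^\<^sub>m k) *\<^sub>v all_ones n)" for k
    by (rule anti_pow[OF QTc Rc ec RQT QTe, unfolded R_def e_def QT_def])
  show "Q0 *\<^sub>v (map_mat of_int (skew_adj n Arc) *\<^sub>v v)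
            = - (map_mat of_int (skew_adj n Arc) *\<^sub>v (Q0 *\<^sub>v v))" if "v \<in> carrier_vec n" for v
    by (rule RQ[OF that, unfolded R_def])
qed

lemma X_exists:
  fixes Q0 :: "rat mat"
  assumes og: "oriented_graph n Arc"
    and Q0: "regular_rat_orthogonal n Q0"
    and conj: "transpose_mat Q0 * map_mat of_int (skew_adj n Arc) * Q0
                  = map_mat of_int (skew_adj n (converse_graph Arc))"
    and dW: "det (W_of n Arc) \<noteq> 0"
  shows "\<exists>X. X \<in> carrier_mat n n \<and> 0 < level Q0 \<and>
    (\<forall>k. transpose_mat X *\<^sub>v ((skew_adj n Arc ^\<^sub>m k) *\<^sub>v all_ones n)
        = (int (level Q0) * (-1)^k) \<cdot>\<^sub>v ((skew_adj n Arc ^\<^sub>m k) *\<^sub>v all_ones n)) \<and>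
    (\<forall>v \<in> carrier_vec n. X *\<^sub>v (X *\<^sub>v v) = (int (level Q0))^2 \<cdot>\<^sub>v v) \<and>
    (\<forall>v \<in> carrier_vec n. X *\<^sub>v (skew_adj n Arc *\<^sub>v v) = - (skew_adj n Arc *\<^sub>v (X *\<^sub>v v)))"
proof -
  define S where "S = skew_adj n Arc"
  define R where "R = map_mat (of_int :: int \<Rightarrow> rat) S"
  define l where "l = level Q0"
  define e where "e = (all_ones n :: int vec)"
  define er where "er = (all_ones n :: rat vec)"
  define E where "E = (\<lambda>k. (S ^\<^sub>m k) *\<^sub>v e)"
  define ER where "ER = (\<lambda>k. (R ^\<^sub>m k) *\<^sub>v er)"
  have Sc: "S \<in> carrier_mat n n" unfolding S_def by (rule skew_adj_carrier)
  have Rc: "R \<in> carrier_mat n n" unfolding R_def using Sc by simp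
  have Qc: "Q0 \<in> carrier_mat n n" using Q0 unfolding regular_rat_orthogonal_def by simp
  have ec: "e \<in> carrier_vec n" unfolding e_def all_ones_def by simp
  have erc: "er \<in> carrier_vec n" unfolding er_def all_ones_def by simp
  have Ec: "E k \<in> carrier_vec n" for k unfolding E_def by (rule carrier_vecI) (use Sc in simp)
  have ERc: "ER k \<in> carrier_vec n" for k unfolding ER_def by (rule carrier_vecI) (use Rc in simp)
  note QF = Q0_facts[OF og Q0 conj, folded S_def, folded R_def er_def, folded ER_def]
  have lv: "0 < l \<and> (\<forall>i<n. \<forall>j<n. of_nat l * Q0 $$ (i,j) \<in> \<int>)" unfolding l_def by (rule level_ok[OF Qc])
  define X where "X = mat n n (\<lambda>(i,j). \<lfloor>of_nat l * Q0 $$ (i,j)\<rfloor>)"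
  have Xc: "X \<in> carrier_mat n n" unfolding X_def by simp
  have XR: "(of_int (X $$ (i,j)) :: rat) = of_nat l * Q0 $$ (i,j)" if "i < n" "j < n" for i j
  proof -
    have "of_nat l * Q0 $$ (i,j) \<in> \<int>" using lv that by blast
    then obtain m where m: "of_nat l * Q0 $$ (i,j) = of_int m" by (auto elim!: Ints_cases)
    show ?thesis using that m by (simp add: X_def)
  qed
  have EX: "(of_int ((X *\<^sub>v v) $ r) :: rat) = of_nat l * (Q0 *\<^sub>v map_vec of_int v) $ r"
    if v: "v \<in> carrier_vec n" and r: "r < n" for v r
  proof -
    have "(of_int ((X *\<^sub>v v) $ r) :: rat) = (\<Sum>k=0..<n. of_int (X $$ (r,k)) * of_int (v $ k))"
      using Xc v r by (simp add: scalar_prod_def)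
    also have "\<dots> = (\<Sum>k=0..<n. of_nat l * (Q0 $$ (r,k) * of_int (v $ k)))"
      by (intro sum.cong refl) (use XR r in auto)
    also have "\<dots> = of_nat l * (Q0 *\<^sub>v map_vec of_int v) $ r"
      using Qc v r by (simp add: scalar_prod_def sum_distrib_left)
    finally show ?thesis .
  qed
  have EXT: "(of_int ((transpose_mat X *\<^sub>v v) $ r) :: rat) = of_nat l * (transpose_mat Q0 *\<^sub>v map_vec of_int v) $ r"
    if v: "v \<in> carrier_vec n" and r: "r < n" for v r
  proof -
    have "(of_int ((transpose_mat X *\<^sub>v v) $ r) :: rat) = (\<Sum>k=0..<n. of_int (X $$ (k,r)) * of_int (v $ k))"
      using Xc v r by (simp add: scalar_prod_def)
    also have "\<dots> = (\<Sum>k=0..<n. of_nat l * (Q0 $$ (k,r) * of_int (v $ k)))"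
      by (intro sum.cong refl) (use XR r in auto)
    also have "\<dots> = of_nat l * (transpose_mat Q0 *\<^sub>v map_vec of_int v) $ r"
      using Qc v r by (simp add: scalar_prod_def sum_distrib_left)
    finally show ?thesis .
  qed
  have MX: "map_vec of_int (X *\<^sub>v v) = (of_nat l :: rat) \<cdot>\<^sub>v (Q0 *\<^sub>v map_vec of_int v)"
    if v: "v \<in> carrier_vec n" for v
    by (rule eq_vecI) (use EX[OF v] Xc Qc in auto)
  have MS: "map_vec of_int (S *\<^sub>v v) = R *\<^sub>v map_vec (of_int :: int \<Rightarrow> rat) v"
    if v: "v \<in> carrier_vec n" for v
    unfolding R_def by (rule of_int_hom.mult_mat_vec_hom[OF Sc v])
  have ME: "map_vec (of_int :: int \<Rightarrow> rat) (E k) = ER k" for k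
  proof -
    have "map_vec (of_int :: int \<Rightarrow> rat) (E k) = map_mat of_int (S ^\<^sub>m k) *\<^sub>v map_vec of_int e"
      unfolding E_def by (rule of_int_hom.mult_mat_vec_hom) (use Sc ec in auto)
    also have "map_mat of_int (S ^\<^sub>m k) = R ^\<^sub>m k" unfolding R_def by (rule of_int_hom.mat_hom_pow[OF Sc])
    also have "map_vec of_int e = er" unfolding e_def er_def all_ones_def by auto
    finally show ?thesis unfolding ER_def .
  qed
  define WR where "WR = map_mat (of_int :: int \<Rightarrow> rat) (W_of n Arc)"
  have WRc: "WR \<in> carrier_mat n n" unfolding WR_def W_of_def by (simp add: walk_matrix_def)
  have WRidx: "WR $$ (i,k) = ER k $ i" if "i < n" "k < n" for i k
  proof -
    have "WR $$ (i,k) = of_int (E k $ i)" using that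
      unfolding WR_def W_of_def E_def S_def e_def by (simp add: walk_matrix_def)
    also have "\<dots> = map_vec of_int (E k) $ i" using that Ec[of k] by simp
    finally show ?thesis using ME by simp
  qed
  have QQv: "(Q0 * Q0) *\<^sub>v ER k = ER k" for k
  proof -
    have "(Q0 * Q0) *\<^sub>v ER k = Q0 *\<^sub>v (Q0 *\<^sub>v ER k)" using Qc ERc by simp
    also have "\<dots> = Q0 *\<^sub>v ((-1)^k \<cdot>\<^sub>v ER k)" using QF(1) by (simp add: ER_def)
    also have "\<dots> = (-1)^k \<cdot>\<^sub>v (Q0 *\<^sub>v ER k)" by (rule mult_mat_vec[OF Qc ERc])
    also have "\<dots> = (-1)^k \<cdot>\<^sub>v ((-1)^k \<cdot>\<^sub>v ER k)" using QF(1) by (simp add: ER_def)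
    also have "\<dots> = ER k" by (rule eq_vecI) (auto simp: power_mult_distrib[symmetric])
    finally show ?thesis .
  qed
  have QQW: "(Q0 * Q0) * WR = WR"
  proof (rule eq_matI)
    fix i k assume ik: "i < dim_row WR" "k < dim_col WR"
    then have ik': "i < n" "k < n" using WRc by auto
    have dimER: "dim_vec (ER k) = n" using ERc[of k] by simp
    have colW: "col WR k = ER k"
    proof (rule eq_vecI)
      fix ia assume "ia < dim_vec (ER k)"
      then have ia: "ia < n" using dimER by simp
      show "col WR k $ ia = ER k $ ia" using WRc ik' ia WRidx[OF ia ik'(2)] by simp
    qed (use WRc dimER in simp)
    have "((Q0 * Q0) * WR) $$ (i,k) = row (Q0 * Q0) i \<bullet> col WR k"
      by (rule index_mult_mat(1)) (use ik' Qc WRc in simp_all)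
    also have "\<dots> = ((Q0 * Q0) *\<^sub>v ER k) $ i" using ik' Qc colW by simp
    also have "\<dots> = WR $$ (i,k)" using QQv WRidx ik' by simp
    finally show "((Q0 * Q0) * WR) $$ (i,k) = WR $$ (i,k)" .
  qed (use Qc WRc in auto)
  define d where "d = det WR"
  have d0: "d \<noteq> 0" unfolding d_def WR_def using dW by (simp add: of_int_hom.hom_det)
  have adj: "WR * adj_mat WR = d \<cdot>\<^sub>m 1\<^sub>m n" unfolding d_def by (rule adj_mat(2)[OF WRc])
  have adjc: "adj_mat WR \<in> carrier_mat n n" by (rule adj_mat(1)[OF WRc])
  have QQc: "Q0 * Q0 \<in> carrier_mat n n" using Qc by simp
  have "(Q0 * Q0) * (d \<cdot>\<^sub>m 1\<^sub>m n) = d \<cdot>\<^sub>m ((Q0 * Q0) * 1\<^sub>m n)"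
    by (rule mult_smult_distrib[OF QQc one_carrier_mat])
  also have "(Q0 * Q0) * 1\<^sub>m n = Q0 * Q0" by (rule right_mult_one_mat[OF QQc])
  finally have "d \<cdot>\<^sub>m (Q0 * Q0) = (Q0 * Q0) * (d \<cdot>\<^sub>m 1\<^sub>m n)" by simp
  also have "\<dots> = (Q0 * Q0) * (WR * adj_mat WR)" using adj by simp
  also have "\<dots> = ((Q0 * Q0) * WR) * adj_mat WR" by (rule assoc_mult_mat[symmetric]) (use QQc WRc adjc in auto)
  also have "\<dots> = d \<cdot>\<^sub>m 1\<^sub>m n" using QQW adj by simp
  finally have dd: "d \<cdot>\<^sub>m (Q0 * Q0) = d \<cdot>\<^sub>m 1\<^sub>m n" .
  have QQ: "Q0 * Q0 = 1\<^sub>m n"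
  proof (rule eq_matI)
    fix i j assume ij: "i < dim_row (1\<^sub>m n :: rat mat)" "j < dim_col (1\<^sub>m n :: rat mat)"
    have "(d \<cdot>\<^sub>m (Q0 * Q0)) $$ (i,j) = (d \<cdot>\<^sub>m 1\<^sub>m n) $$ (i,j)" using dd by simp
    then have "d * (Q0 * Q0) $$ (i,j) = d * (1\<^sub>m n) $$ (i,j)" using ij Qc by simp
    then show "(Q0 * Q0) $$ (i,j) = (1\<^sub>m n) $$ (i,j)" using d0 by simp
  qed (use Qc in auto)
  have XT: "transpose_mat X *\<^sub>v E k = (int l * (-1)^k) \<cdot>\<^sub>v E k" for k
  proof (rule eq_vecI)
    fix r assume "r < dim_vec ((int l * (-1)^k) \<cdot>\<^sub>v E k)"
    then have r: "r < n" using Ec[of k] by simp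
    have "(of_int ((transpose_mat X *\<^sub>v E k) $ r) :: rat) = of_nat l * (transpose_mat Q0 *\<^sub>v ER k) $ r"
      using EXT[OF Ec r] ME by simp
    also have "\<dots> = of_nat l * ((-1)^k * ER k $ r)" using QF(2) r carrier_vecD[OF ERc[of k]] by (simp add: ER_def)
    also have "\<dots> = of_int (((int l * (-1)^k) \<cdot>\<^sub>v E k) $ r)"
      using r Ec[of k] ME[of k, symmetric] by simp
    finally show "(transpose_mat X *\<^sub>v E k) $ r = ((int l * (-1)^k) \<cdot>\<^sub>v E k) $ r"
      by (simp only: of_int_eq_iff)
  qed (use Xc carrier_vecD[OF Ec[of k]] in simp)
  have XX: "X *\<^sub>v (X *\<^sub>v v) = (int l)^2 \<cdot>\<^sub>v v" if v: "v \<in> carrier_vec n" for v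
  proof (rule eq_vecI)
    fix r assume "r < dim_vec ((int l)^2 \<cdot>\<^sub>v v)"
    then have r: "r < n" using v by simp
    have Xv: "X *\<^sub>v v \<in> carrier_vec n" using Xc v by simp
    have vr: "map_vec (of_int :: int \<Rightarrow> rat) v \<in> carrier_vec n" using v by simp
    have "(of_int ((X *\<^sub>v (X *\<^sub>v v)) $ r) :: rat) = of_nat l * (Q0 *\<^sub>v map_vec of_int (X *\<^sub>v v)) $ r"
      by (rule EX[OF Xv r])
    also have "\<dots> = of_nat l * (Q0 *\<^sub>v (of_nat l \<cdot>\<^sub>v (Q0 *\<^sub>v map_vec of_int v))) $ r"
      using MX[OF v] by simp
    also have "\<dots> = of_nat l * of_nat l * ((Q0 * Q0) *\<^sub>v map_vec of_int v) $ r"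
      using mult_mat_vec[OF Qc, of "Q0 *\<^sub>v map_vec of_int v" "of_nat l"] Qc vr r by simp
    also have "\<dots> = of_int (((int l)^2 \<cdot>\<^sub>v v) $ r)" using QQ vr r v by (simp add: power2_eq_square)
    finally show "(X *\<^sub>v (X *\<^sub>v v)) $ r = ((int l)^2 \<cdot>\<^sub>v v) $ r" by (simp only: of_int_eq_iff)
  qed (use Xc v in simp)
  have XS: "X *\<^sub>v (S *\<^sub>v v) = - (S *\<^sub>v (X *\<^sub>v v))" if v: "v \<in> carrier_vec n" for v
  proof (rule eq_vecI)
    fix r assume "r < dim_vec (- (S *\<^sub>v (X *\<^sub>v v)))"
    then have r: "r < n" using Sc by simp
    have Xv: "X *\<^sub>v v \<in> carrier_vec n" using Xc v by simp
    have Sv: "S *\<^sub>v v \<in> carrier_vec n" using Sc v by simp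
    have vr: "map_vec (of_int :: int \<Rightarrow> rat) v \<in> carrier_vec n" using v by simp
    have "(of_int ((X *\<^sub>v (S *\<^sub>v v)) $ r) :: rat) = of_nat l * (Q0 *\<^sub>v (R *\<^sub>v map_vec of_int v)) $ r"
      using EX[OF Sv r] MS[OF v] by simp
    also have "\<dots> = of_nat l * (- (R *\<^sub>v (Q0 *\<^sub>v map_vec of_int v))) $ r"
      using QF(3)[OF vr] by simp
    also have "\<dots> = - ((R *\<^sub>v (of_nat l \<cdot>\<^sub>v (Q0 *\<^sub>v map_vec of_int v))) $ r)"
      using mult_mat_vec[OF Rc, of "Q0 *\<^sub>v map_vec of_int v" "of_nat l"] Rc Qc vr r by simp
    also have "\<dots> = - ((R *\<^sub>v map_vec of_int (X *\<^sub>v v)) $ r)" using MX[OF v] by simp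
    also have "\<dots> = - (map_vec of_int (S *\<^sub>v (X *\<^sub>v v)) $ r)" using MS[OF Xv] by simp
    also have "\<dots> = of_int ((- (S *\<^sub>v (X *\<^sub>v v))) $ r)" using r Sc by simp
    finally show "(X *\<^sub>v (S *\<^sub>v v)) $ r = (- (S *\<^sub>v (X *\<^sub>v v))) $ r" by (simp only: of_int_eq_iff)
  qed (use Xc Sc v in simp)
  show ?thesis
    using Xc lv XT XX XS unfolding l_def E_def e_def S_def by blast
qed

theorem lemma3p9:
  fixes n :: nat and Arc :: "nat \<Rightarrow> nat \<Rightarrow> bool" and Q0 :: "rat mat"
    and p :: nat and z :: "int vec"
  assumes G: "in_G n Arc"
    and Q0: "regular_rat_orthogonal n Q0"
    and Q0_conj: "transpose_mat Q0 * map_mat of_int (skew_adj n Arc) * Q0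
                  = map_mat of_int (skew_adj n (converse_graph Arc))"
    and p: "prime p" "odd p"
    and pl: "\<not> p dvd level Q0"
    and zdim: "z \<in> carrier_vec n"
    and znz: "\<exists>i<n. \<not> int p dvd z $ i"
    and Wz: "\<forall>i<n. int p dvd (transpose_mat (W_of n Arc) *\<^sub>v z) $ i"
  shows "\<not> int p dvd (z \<bullet> z)"
proof
  assume zz: "int p dvd z \<bullet> z"
  define S where "S = skew_adj n Arc"
  define e where "e = (all_ones n :: int vec)"
  define E where "E = (\<lambda>k. (S ^\<^sub>m k) *\<^sub>v e)"
  define W where "W = W_of n Arc"
  define q where "q = int p"
  define l where "l = int (level Q0)"
  have og: "oriented_graph n Arc" using G unfolding in_G_def by simp
  obtain m where dWm: "det W = 2 ^ (n div 2) * m" and modd: "odd m" and msq: "squarefree m"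
    using G unfolding in_G_def W_def by blast
  have q: "prime q" unfolding q_def using p(1) by simp
  have q2: "\<not> q dvd 2"
  proof
    assume "q dvd 2"
    then have "q \<le> 2" by (rule zdvd_imp_le) simp
    moreover have "q \<ge> 2" using q by (rule prime_ge_2_int)
    ultimately have "p = 2" unfolding q_def by simp
    then show False using p(2) by simp
  qed
  have ndet: "\<not> q^2 dvd det W"
  proof
    assume "q^2 dvd det W"
    then have d: "q^2 dvd 2 ^ (n div 2) * m" using dWm by simp
    have "coprime q 2" by (rule prime_imp_coprime[OF q q2])
    then have "coprime (q^2) (2 ^ (n div 2))" by simp
    then have "q^2 dvd m" using d by (simp add: coprime_dvd_mult_right_iff)
    then have "q dvd 1" using msq unfolding squarefree_def by blast
    then show False using q by (simp add: prime_int_iff)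
  qed
  have dW0: "det W \<noteq> 0" using dWm modd by auto
  have Sc: "S \<in> carrier_mat n n" unfolding S_def by (rule skew_adj_carrier)
  have sk: "S $$ (j,i) = - S $$ (i,j)" if "i < n" "j < n" for i j
    unfolding S_def by (rule skew_adj_skew[OF og that])
  have Wc: "W \<in> carrier_mat n n" unfolding W_def W_of_def by (rule walk_carrier)
  have WTc: "transpose_mat W \<in> carrier_mat n n" using Wc by simp
  have ndet': "\<not> q^2 dvd det (transpose_mat W)" using ndet det_transpose[OF Wc] by simp
  have ec: "e \<in> carrier_vec n" unfolding e_def all_ones_def by simp
  have Ec: "E k \<in> carrier_vec n" for k unfolding E_def by (rule carrier_vecI) (use Sc in simp)
  have ESuc: "S *\<^sub>v E k = E (Suc k)" for k unfolding E_def by (rule pow_vec_Suc[OF Sc ec, symmetric])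
  have WT: "(transpose_mat W *\<^sub>v v) $ k = E k \<bullet> v" if "v \<in> carrier_vec n" "k < n" for v k
    unfolding W_def W_of_def E_def e_def S_def by (rule walk_T[OF skew_adj_carrier that])
  have LKz: "q dvd E k \<bullet> z" if "k < n" for k using Wz WT[OF zdim that] that unfolding q_def W_def by auto
  have LKz': "\<forall>k<n. q dvd (transpose_mat W *\<^sub>v z) $ k" using Wz unfolding q_def W_def by simp
  obtain i0 where i0: "i0 < n" "\<not> q dvd z $ i0" using znz unfolding q_def by blast
  have n0: "n > 0" using i0 by simp
  have qdetW: "q dvd det W"
  proof -
    define M where "M = replace_col (transpose_mat W) (transpose_mat W *\<^sub>v z) i0"
    have Mc: "M \<in> carrier_mat n n" using WTc by (simp add: M_def replace_col_def)
    have dM: "det M = z $ i0 * det (transpose_mat W)" unfolding M_def by (rule cramer_lemma_mat[OF WTc zdim i0(1)])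
    have "q dvd det M"
    proof (rule det_col_dvd[OF Mc i0(1)])
      fix r assume r: "r < n"
      have "M $$ (r, i0) = (transpose_mat W *\<^sub>v z) $ r" using r WTc i0 by (simp add: M_def replace_col_def)
      then show "q dvd M $$ (r, i0)" using LKz' r by simp
    qed
    then have "q dvd z $ i0 * det W" using dM det_transpose[OF Wc] by simp
    then show ?thesis using i0(2) q by (simp add: prime_dvd_mult_iff)
  qed
  obtain c0 where c0: "det W = q * c0" using qdetW by (auto elim!: dvdE)
  have c0q: "\<not> q dvd c0"
  proof
    assume "q dvd c0"
    then have "q^2 dvd det W" using c0 by (auto simp: power2_eq_square elim!: dvdE)
    then show False using ndet by simp
  qed
  \<comment> \<open>the integral matrix X = level * Q0\<close>
  obtain X where Xc: "X \<in> carrier_mat n n" and lpos: "0 < level Q0"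
    and XT: "\<And>k. transpose_mat X *\<^sub>v E k = (l * (-1)^k) \<cdot>\<^sub>v E k"
    and XX: "\<And>v. v \<in> carrier_vec n \<Longrightarrow> X *\<^sub>v (X *\<^sub>v v) = l^2 \<cdot>\<^sub>v v"
    and XS: "\<And>v. v \<in> carrier_vec n \<Longrightarrow> X *\<^sub>v (S *\<^sub>v v) = - (S *\<^sub>v (X *\<^sub>v v))"
    using X_exists[OF og Q0 Q0_conj dW0[unfolded W_def]] unfolding l_def E_def e_def S_def by blast
  have lq: "\<not> q dvd l" using pl unfolding q_def l_def by simp
  have Xzc: "X *\<^sub>v z \<in> carrier_vec n" using Xc zdim by simp
  have Szc: "S *\<^sub>v z \<in> carrier_vec n" using Sc zdim by simp
  have zd: "dim_vec z = n" using zdim by simp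
  have Xzd: "dim_vec (X *\<^sub>v z) = n" using Xc by simp
  \<comment> \<open>Step 1: X z is congruent to +-l z\<close>
  have TXz: "E k \<bullet> (X *\<^sub>v z) = l * (-1)^k * (E k \<bullet> z)" for k
  proof -
    have "E k \<bullet> (X *\<^sub>v z) = (transpose_mat X *\<^sub>v E k) \<bullet> z"
      by (rule transpose_vec_mult_scalar[OF Xc zdim Ec, symmetric])
    also have "\<dots> = ((l * (-1)^k) \<cdot>\<^sub>v E k) \<bullet> z" by (simp only: XT)
    also have "\<dots> = l * (-1)^k * (E k \<bullet> z)" using Ec[of k] zdim by simp
    finally show ?thesis .
  qed
  define a where "a = l \<cdot>\<^sub>v z + X *\<^sub>v z"
  define b where "b = l \<cdot>\<^sub>v z - X *\<^sub>v z"
  have ac: "a \<in> carrier_vec n" using zdim Xzc by (simp add: a_def)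
  have bc: "b \<in> carrier_vec n" using zdim Xzc by (simp add: b_def)
  have a_i: "a $ i = l * z $ i + (X *\<^sub>v z) $ i" if "i < n" for i using that zd Xzd by (simp add: a_def)
  have b_i: "b $ i = l * z $ i - (X *\<^sub>v z) $ i" if "i < n" for i using that zd Xzd by (simp add: b_def)
  have LKa: "\<forall>k<n. q dvd (transpose_mat W *\<^sub>v a) $ k"
  proof (intro allI impI)
    fix k assume k: "k < n"
    have "(transpose_mat W *\<^sub>v a) $ k = E k \<bullet> a" by (rule WT[OF ac k])
    also have "\<dots> = l * (E k \<bullet> z) + E k \<bullet> (X *\<^sub>v z)"
      unfolding a_def using Ec[of k] zdim Xzc by (simp add: scalar_prod_add_distrib)
    also have "\<dots> = (l + l * (-1)^k) * (E k \<bullet> z)" by (simp add: TXz algebra_simps)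
    finally show "q dvd (transpose_mat W *\<^sub>v a) $ k" using LKz[OF k] by simp
  qed
  have LKb: "\<forall>k<n. q dvd (transpose_mat W *\<^sub>v b) $ k"
  proof (intro allI impI)
    fix k assume k: "k < n"
    have "(transpose_mat W *\<^sub>v b) $ k = E k \<bullet> b" by (rule WT[OF bc k])
    also have "\<dots> = l * (E k \<bullet> z) - E k \<bullet> (X *\<^sub>v z)"
      unfolding b_def using Ec[of k] zdim Xzc by (simp add: scalar_prod_minus_distrib)
    also have "\<dots> = (l - l * (-1)^k) * (E k \<bullet> z)" by (simp add: TXz algebra_simps)
    finally show "q dvd (transpose_mat W *\<^sub>v b) $ k" using LKz[OF k] by simp
  qed
  have XXz: "(X *\<^sub>v (X *\<^sub>v z)) $ i = l^2 * z $ i" if "i < n" for i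
    using XX[OF zdim] that zdim by simp
  have Xa: "(X *\<^sub>v a) $ i = l * a $ i" if i: "i < n" for i
  proof -
    have "(X *\<^sub>v a) $ i = (X *\<^sub>v (l \<cdot>\<^sub>v z)) $ i + (X *\<^sub>v (X *\<^sub>v z)) $ i"
      unfolding a_def using mult_add_distrib_mat_vec[OF Xc, of "l \<cdot>\<^sub>v z" "X *\<^sub>v z"] zdim Xzc Xc i by simp
    also have "\<dots> = l * (X *\<^sub>v z) $ i + l^2 * z $ i" using mv_smult_idx[OF Xc zdim i] XXz[OF i] by simp
    finally show ?thesis using a_i[OF i] by (simp add: algebra_simps power2_eq_square)
  qed
  have Xb: "(X *\<^sub>v b) $ i = - l * b $ i" if i: "i < n" for i
  proof -
    have "(X *\<^sub>v b) $ i = (X *\<^sub>v (l \<cdot>\<^sub>v z)) $ i - (X *\<^sub>v (X *\<^sub>v z)) $ i"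
      unfolding b_def using mult_minus_distrib_mat_vec[OF Xc, of "l \<cdot>\<^sub>v z" "X *\<^sub>v z"] zdim Xzc Xc i by simp
    also have "\<dots> = l * (X *\<^sub>v z) $ i - l^2 * z $ i" using mv_smult_idx[OF Xc zdim i] XXz[OF i] by simp
    finally have h: "(X *\<^sub>v b) $ i = l * (X *\<^sub>v z) $ i - l^2 * z $ i" .
    have "- l * b $ i = l * (X *\<^sub>v z) $ i - l^2 * z $ i"
      unfolding b_i[OF i] by (simp add: algebra_simps power2_eq_square)
    then show ?thesis using h by simp
  qed
  have ab: "(\<forall>i<n. q dvd a $ i) \<or> (\<forall>i<n. q dvd b $ i)"
  proof (rule ccontr)
    assume "\<not> ?thesis"
    then obtain i1 k where i1: "i1 < n" "\<not> q dvd a $ i1" and k: "k < n" "\<not> q dvd b $ k" by blast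
    define v where "v = b $ k \<cdot>\<^sub>v a - a $ k \<cdot>\<^sub>v b"
    have vc: "v \<in> carrier_vec n" using ac bc by (simp add: v_def)
    have v_i: "v $ i = b $ k * a $ i - a $ k * b $ i" if "i < n" for i using that ac bc by (simp add: v_def)
    have v0: "\<forall>i<n. q dvd v $ i"
    proof (intro allI impI)
      fix i assume i: "i < n"
      have "q dvd a $ i * b $ k - a $ k * b $ i"
        by (rule kernel_minor[OF WTc ac bc q ndet' LKa LKb i k(1)])
      moreover have "v $ i = a $ i * b $ k - a $ k * b $ i" using v_i[OF i] by (simp add: mult.commute)
      ultimately show "q dvd v $ i" by simp
    qed
    have "q dvd (X *\<^sub>v v) $ i1" by (rule zero_mult[OF Xc vc v0 i1(1)])
    moreover have "(X *\<^sub>v v) $ i1 = b $ k * (l * a $ i1) - a $ k * (- l * b $ i1)"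
      unfolding v_def using mult_vec_lincomb[OF Xc ac bc i1(1)] Xa[OF i1(1)] Xb[OF i1(1)] by simp
    ultimately have h1: "q dvd b $ k * (l * a $ i1) - a $ k * (- l * b $ i1)" by simp
    have h2: "q dvd l * v $ i1" using v0 i1 by simp
    have "q dvd (b $ k * (l * a $ i1) - a $ k * (- l * b $ i1)) + l * v $ i1"
      using h1 h2 by (rule dvd_add)
    also have "(b $ k * (l * a $ i1) - a $ k * (- l * b $ i1)) + l * v $ i1 = 2 * (l * (b $ k * a $ i1))"
      unfolding v_i[OF i1(1)] by (simp add: algebra_simps)
    finally have "q dvd 2 * (l * (b $ k * a $ i1))" .
    then show False using q q2 lq k(2) i1(2) by (simp add: prime_dvd_mult_iff)
  qed
  obtain \<sigma> :: int where sig: "\<sigma> = 1 \<or> \<sigma> = -1" and Xz: "\<forall>i<n. q dvd (X *\<^sub>v z) $ i - \<sigma> * l * z $ i"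
  proof (cases "\<forall>i<n. q dvd a $ i")
    case True
    show ?thesis
    proof (rule that[of "-1"])
      show "\<forall>i<n. q dvd (X *\<^sub>v z) $ i - (-1) * l * z $ i" using True a_i by (simp add: algebra_simps)
    qed simp
  next
    case False
    then have bq: "\<forall>i<n. q dvd b $ i" using ab by blast
    show ?thesis
    proof (rule that[of "1"])
      show "\<forall>i<n. q dvd (X *\<^sub>v z) $ i - 1 * l * z $ i"
      proof (intro allI impI)
        fix i assume i: "i < n"
        have "q dvd - b $ i" using bq i by simp
        then show "q dvd (X *\<^sub>v z) $ i - 1 * l * z $ i" using b_i[OF i] by (simp add: algebra_simps)
      qed
    qed simp
  qed
  \<comment> \<open>Step 2: z lies in the column space of W mod q\<close>
  define A where "A = adj_mat W"
  have Ac: "A \<in> carrier_mat n n" unfolding A_def by (rule adj_mat(1)[OF Wc])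
  have Adim: "dim_row A = n" "dim_col A = n" using Ac by auto
  have Wdim: "dim_row W = n" "dim_col W = n" using Wc by auto
  have WA: "W * A = det W \<cdot>\<^sub>m 1\<^sub>m n" unfolding A_def by (rule adj_mat(2)[OF Wc])
  have AW: "A * W = det W \<cdot>\<^sub>m 1\<^sub>m n" unfolding A_def by (rule adj_mat(3)[OF Wc])
  have Az: "\<forall>k<n. q dvd (A *\<^sub>v z) $ k"
  proof (intro allI impI)
    fix k assume k: "k < n"
    define r where "r = row A k"
    have rc: "r \<in> carrier_vec n" using Ac k unfolding r_def by simp
    have LKr: "\<forall>j<n. q dvd (transpose_mat W *\<^sub>v r) $ j"
    proof (intro allI impI)
      fix j assume j: "j < n"
      have "(transpose_mat W *\<^sub>v r) $ j = col W j \<bullet> r" using Wc j by simp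
      also have "\<dots> = r \<bullet> col W j" using Wc rc by (intro comm_scalar_prod) auto
      also have "\<dots> = (A * W) $$ (k, j)" using Ac Wc k j unfolding r_def by simp
      also have "\<dots> = det W * (if k = j then 1 else 0)" using AW k j by simp
      finally show "q dvd (transpose_mat W *\<^sub>v r) $ j" using qdetW by simp
    qed
    have minor: "q dvd r $ i * z $ i0 - r $ i0 * z $ i" if i: "i < n" for i
      by (rule kernel_minor[OF WTc rc zdim q ndet' LKr LKz' i i0(1)])
    have "z $ i0 * (r \<bullet> z) - r $ i0 * (z \<bullet> z) = (\<Sum>i=0..<n. (r $ i * z $ i0 - r $ i0 * z $ i) * z $ i)"
      using rc zdim by (simp add: scalar_prod_def sum_distrib_left sum_subtractf algebra_simps)
    also have "q dvd \<dots>"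
    proof (rule dvd_sum)
      fix i assume "i \<in> {0..<n}"
      then have "q dvd r $ i * z $ i0 - r $ i0 * z $ i" using minor by simp
      then show "q dvd (r $ i * z $ i0 - r $ i0 * z $ i) * z $ i" by (rule dvd_mult2)
    qed
    finally have h: "q dvd z $ i0 * (r \<bullet> z) - r $ i0 * (z \<bullet> z)" .
    have "q dvd r $ i0 * (z \<bullet> z)" using zz unfolding q_def by simp
    then have "q dvd z $ i0 * (r \<bullet> z)" using h by (metis dvd_add diff_add_cancel)
    then have "q dvd r \<bullet> z" using q i0(2) by (simp add: prime_dvd_mult_iff)
    then show "q dvd (A *\<^sub>v z) $ k" using Ac k unfolding r_def by simp
  qed
  define t where "t = vec n (\<lambda>k. (A *\<^sub>v z) $ k div q)"
  have tc: "t \<in> carrier_vec n" unfolding t_def by simp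
  have qt: "q \<cdot>\<^sub>v t = A *\<^sub>v z"
    by (rule eq_vecI) (use Az Ac in \<open>auto simp: t_def\<close>)
  have Wt: "(W *\<^sub>v t) $ r = c0 * z $ r" if r: "r < n" for r
  proof -
    have "q * (W *\<^sub>v t) $ r = (W *\<^sub>v (q \<cdot>\<^sub>v t)) $ r" using mv_smult_idx[OF Wc tc r] by simp
    also have "\<dots> = (W *\<^sub>v (A *\<^sub>v z)) $ r" by (simp only: qt)
    also have "W *\<^sub>v (A *\<^sub>v z) = (W * A) *\<^sub>v z" using Wc Ac zdim by simp
    also have "\<dots> = (det W \<cdot>\<^sub>m 1\<^sub>m n) *\<^sub>v z" by (simp only: WA)
    also have "\<dots> $ r = (\<Sum>i=0..<n. det W * (if i = r then 1 else 0) * z $ i)"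
      using r zdim by (simp add: scalar_prod_def)
    also have "\<dots> = (\<Sum>i=0..<n. if i = r then det W * z $ i else 0)" by (rule sum.cong) auto
    also have "\<dots> = det W * z $ r" using r by (simp add: sum.delta)
    finally have "q * (W *\<^sub>v t) $ r = q * (c0 * z $ r)" using c0 by simp
    then show ?thesis using q by (simp add: prime_gt_0_int)
  qed
  \<comment> \<open>Step 3: a right kernel vector with nonzero last entry\<close>
  have "\<exists>k1<n. \<exists>j1<n. \<not> q dvd A $$ (k1, j1)"
  proof (rule ccontr)
    assume "\<not> ?thesis"
    then have Ad: "q dvd A $$ (i, j)" if "i < n" "j < n" for i j using that by blast
    define A' where "A' = mat n n (\<lambda>(i,j). A $$ (i,j) div q)"
    have A'c: "A' \<in> carrier_mat n n" unfolding A'_def by simp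
    have AA': "A = q \<cdot>\<^sub>m A'" by (rule eq_matI) (use Ac Ad in \<open>auto simp: A'_def\<close>)
    have "q \<cdot>\<^sub>m (W * A') = (q * c0) \<cdot>\<^sub>m 1\<^sub>m n"
    proof -
      have "W * A = q \<cdot>\<^sub>m (W * A')" unfolding AA' by (rule mult_smult_distrib[OF Wc A'c])
      then show ?thesis using WA c0 by simp
    qed
    then have WA': "W * A' = c0 \<cdot>\<^sub>m 1\<^sub>m n"
    proof -
      assume h: "q \<cdot>\<^sub>m (W * A') = (q * c0) \<cdot>\<^sub>m 1\<^sub>m n"
      show ?thesis
      proof (rule eq_matI)
        fix i j assume ij: "i < dim_row (c0 \<cdot>\<^sub>m 1\<^sub>m n)" "j < dim_col (c0 \<cdot>\<^sub>m (1\<^sub>m n :: int mat))"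
        have "(q \<cdot>\<^sub>m (W * A')) $$ (i,j) = ((q * c0) \<cdot>\<^sub>m 1\<^sub>m n) $$ (i,j)" using h by simp
        then have "q * (W * A') $$ (i,j) = q * (c0 * (1\<^sub>m n) $$ (i,j))" using ij Wc A'c by simp
        then show "(W * A') $$ (i,j) = (c0 \<cdot>\<^sub>m 1\<^sub>m n) $$ (i,j)" using q ij by (simp add: prime_gt_0_int)
      qed (use Wc A'c in auto)
    qed
    have "det W * det A' = c0 ^ n"
    proof -
      have "det (W * A') = det W * det A'" by (rule det_mult[OF Wc A'c])
      moreover have "det (W * A') = c0 ^ n" using WA' by simp
      ultimately show ?thesis by simp
    qed
    then have "q dvd c0 ^ n" using qdetW by (metis dvd_mult2)
    then have "q dvd c0" using q n0 by (simp add: prime_dvd_power_iff)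
    then show False using c0q by simp
  qed
  then obtain k1 j1 where k1: "k1 < n" and j1: "j1 < n" and Akj: "\<not> q dvd A $$ (k1, j1)" by blast
  define \<kappa> where "\<kappa> = col A j1"
  have \<kappa>c: "\<kappa> \<in> carrier_vec n" unfolding \<kappa>_def by (rule carrier_vecI) (use Ac in simp)
  have \<kappa>k1: "\<not> q dvd \<kappa> $ k1" using Akj Adim k1 j1 unfolding \<kappa>_def by simp
  have RK\<kappa>: "\<forall>r<n. q dvd (W *\<^sub>v \<kappa>) $ r"
  proof (intro allI impI)
    fix r assume r: "r < n"
    have "W *\<^sub>v \<kappa> = col (W * A) j1" unfolding \<kappa>_def by (rule col_mult2[OF Wc Ac j1, symmetric])
    then have "(W *\<^sub>v \<kappa>) $ r = (W * A) $$ (r, j1)" using r j1 Wdim Adim by simp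
    also have "\<dots> = det W * (if r = j1 then 1 else 0)" using WA r j1 by simp
    finally show "q dvd (W *\<^sub>v \<kappa>) $ r" using qdetW by simp
  qed
  have \<kappa>last: "\<not> q dvd \<kappa> $ (n - 1)"
  proof
    assume last: "q dvd \<kappa> $ (n - 1)"
    define D where "D = {i. i < n \<and> \<not> q dvd \<kappa> $ i}"
    have Dfin: "finite D" unfolding D_def by simp
    have Dne: "D \<noteq> {}" using k1 \<kappa>k1 unfolding D_def by blast
    define d where "d = Max D"
    have dD: "d \<in> D" unfolding d_def using Dfin Dne by (rule Max_in)
    have dmax: "i \<le> d" if "i \<in> D" for i unfolding d_def using Dfin that by (rule Max_ge)
    have dn: "d < n - 1" using dD last unfolding D_def by (cases "d = n - 1") auto
    have dq: "\<not> q dvd \<kappa> $ d" using dD unfolding D_def by simp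
    define \<kappa>2 where "\<kappa>2 = vec n (\<lambda>i. if i = n - 1 then 0 else \<kappa> $ i)"
    have \<kappa>2c: "\<kappa>2 \<in> carrier_vec n" unfolding \<kappa>2_def by simp
    have \<kappa>2last: "\<kappa>2 $ (n - 1) = 0" using n0 unfolding \<kappa>2_def by simp
    have cong2: "\<forall>i<n. q dvd \<kappa>2 $ i - \<kappa> $ i" using last unfolding \<kappa>2_def by auto
    have RK2: "\<forall>r<n. q dvd (W *\<^sub>v \<kappa>2) $ r"
    proof (intro allI impI)
      fix r assume r: "r < n"
      have "q dvd (W *\<^sub>v \<kappa>2) $ r - (W *\<^sub>v \<kappa>) $ r" by (rule cong_mult[OF Wc \<kappa>2c \<kappa>c cong2 r])
      then show "q dvd (W *\<^sub>v \<kappa>2) $ r" using RK\<kappa> r by (metis dvd_add diff_add_cancel)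
    qed
    define sh where "sh = vec n (\<lambda>i. if i = 0 then 0 else \<kappa>2 $ (i - 1))"
    have shc: "sh \<in> carrier_vec n" unfolding sh_def by simp
    have Wsh: "W *\<^sub>v sh = S *\<^sub>v (W *\<^sub>v \<kappa>2)"
      unfolding sh_def W_def W_of_def S_def by (rule walk_shift[OF skew_adj_carrier \<kappa>2c n0 \<kappa>2last])
    have W\<kappa>2c: "W *\<^sub>v \<kappa>2 \<in> carrier_vec n" using Wc \<kappa>2c by simp
    have RKsh: "\<forall>r<n. q dvd (W *\<^sub>v sh) $ r"
      unfolding Wsh using zero_mult[OF Sc W\<kappa>2c RK2] by blast
    have d1: "d + 1 < n" using dn by simp
    have "q dvd \<kappa>2 $ d * sh $ (d + 1) - \<kappa>2 $ (d + 1) * sh $ d"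
      by (rule kernel_minor[OF Wc \<kappa>2c shc q ndet RK2 RKsh]) (use dn in simp_all)
    moreover have "sh $ (d + 1) = \<kappa> $ d" using d1 dn unfolding sh_def \<kappa>2_def by simp
    moreover have "\<kappa>2 $ d = \<kappa> $ d" using dn unfolding \<kappa>2_def by simp
    moreover have "q dvd \<kappa>2 $ (d + 1)"
    proof (cases "d + 1 = n - 1")
      case True then show ?thesis unfolding \<kappa>2_def using d1 by simp
    next
      case False
      have "d + 1 \<notin> D" using dmax by fastforce
      then show ?thesis unfolding \<kappa>2_def using d1 False D_def by simp
    qed
    ultimately have "q dvd \<kappa> $ d * \<kappa> $ d"
      by (metis dvd_mult2 dvd_add diff_add_cancel)
    then show False using dq q by (simp add: prime_dvd_mult_iff)
  qed
  define t' where "t' = \<kappa> $ (n - 1) \<cdot>\<^sub>v t - t $ (n - 1) \<cdot>\<^sub>v \<kappa>"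
  have t'c: "t' \<in> carrier_vec n" using tc \<kappa>c unfolding t'_def by simp
  have t'last: "t' $ (n - 1) = 0" using tc \<kappa>c n0 unfolding t'_def by simp
  define c1 where "c1 = \<kappa> $ (n - 1) * c0"
  have c1q: "\<not> q dvd c1" using \<kappa>last c0q q unfolding c1_def by (simp add: prime_dvd_mult_iff)
  have Wt': "q dvd (W *\<^sub>v t') $ r - c1 * z $ r" if r: "r < n" for r
  proof -
    have "(W *\<^sub>v t') $ r = \<kappa> $ (n - 1) * (W *\<^sub>v t) $ r - t $ (n - 1) * (W *\<^sub>v \<kappa>) $ r"
      unfolding t'_def by (rule mult_vec_lincomb[OF Wc tc \<kappa>c r])
    then have "(W *\<^sub>v t') $ r - c1 * z $ r = - (t $ (n - 1) * (W *\<^sub>v \<kappa>) $ r)"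
      using Wt[OF r] unfolding c1_def by (simp add: algebra_simps)
    then show ?thesis using RK\<kappa> r by simp
  qed
  \<comment> \<open>Step 5: S z vanishes mod q\<close>
  have ESz: "E k \<bullet> (S *\<^sub>v z) = - (E (Suc k) \<bullet> z)" for k
  proof -
    have "(S *\<^sub>v E k) \<bullet> z = - (E k \<bullet> (S *\<^sub>v z))" by (rule skew_scalar[OF Sc sk Ec zdim])
    then show ?thesis using ESuc[of k] by simp
  qed
  define u where "u = W *\<^sub>v \<kappa>"
  have uc: "u \<in> carrier_vec n" using Wc \<kappa>c unfolding u_def by simp
  have WTSz: "(transpose_mat W *\<^sub>v (S *\<^sub>v z)) $ k = - (E (Suc k) \<bullet> z)" if k: "k < n" for k
    using WT[OF Szc k] ESz by simp
  have h1: "(S *\<^sub>v u) \<bullet> z = (\<Sum>k=0..<n. (E (Suc k) \<bullet> z) * \<kappa> $ k)"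
  proof -
    have "(S *\<^sub>v u) \<bullet> z = - (u \<bullet> (S *\<^sub>v z))" by (rule skew_scalar[OF Sc sk uc zdim])
    also have "u \<bullet> (S *\<^sub>v z) = (S *\<^sub>v z) \<bullet> u" by (rule comm_scalar_prod[OF uc Szc])
    also have "\<dots> = (transpose_mat W *\<^sub>v (S *\<^sub>v z)) \<bullet> \<kappa>"
      unfolding u_def by (rule transpose_vec_mult_scalar[OF Wc \<kappa>c Szc, symmetric])
    also have "\<dots> = (\<Sum>k=0..<n. (transpose_mat W *\<^sub>v (S *\<^sub>v z)) $ k * \<kappa> $ k)"
      using \<kappa>c by (simp add: scalar_prod_def)
    also have "\<dots> = (\<Sum>k=0..<n. - ((E (Suc k) \<bullet> z) * \<kappa> $ k))"
      by (intro sum.cong refl) (simp add: WTSz)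
    finally show ?thesis by (simp add: sum_negf)
  qed
  have "q dvd (S *\<^sub>v u) \<bullet> z"
  proof (rule dvd_scalar)
    show "S *\<^sub>v u \<in> carrier_vec n" using Sc uc by simp
    show "z \<in> carrier_vec n" by (rule zdim)
    show "\<forall>i<n. q dvd (S *\<^sub>v u) $ i" using zero_mult[OF Sc uc] RK\<kappa> unfolding u_def by blast
  qed
  then have h2: "q dvd (\<Sum>k=0..<n. (E (Suc k) \<bullet> z) * \<kappa> $ k)" using h1 by simp
  obtain m' where nm: "n = Suc m'" using n0 by (cases n) auto
  have spl: "(\<Sum>k=0..<n. (E (Suc k) \<bullet> z) * \<kappa> $ k) = (\<Sum>k<m'. (E (Suc k) \<bullet> z) * \<kappa> $ k) + (E (Suc m') \<bullet> z) * \<kappa> $ m'"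
    unfolding nm atLeast0LessThan by (rule sum.lessThan_Suc)
  have rest: "q dvd (\<Sum>k<m'. (E (Suc k) \<bullet> z) * \<kappa> $ k)"
  proof (rule dvd_sum)
    fix k assume "k \<in> {..<m'}"
    then have "Suc k < n" using nm by simp
    then have "q dvd E (Suc k) \<bullet> z" by (rule LKz)
    then show "q dvd (E (Suc k) \<bullet> z) * \<kappa> $ k" by (rule dvd_mult2)
  qed
  have "q dvd (\<Sum>k<m'. (E (Suc k) \<bullet> z) * \<kappa> $ k) + (E (Suc m') \<bullet> z) * \<kappa> $ m'"
    using h2 spl by simp
  then have "q dvd (E (Suc m') \<bullet> z) * \<kappa> $ m'" by (simp only: dvd_add_right_iff[OF rest])
  moreover have "\<not> q dvd \<kappa> $ m'" using \<kappa>last nm by simp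
  ultimately have En: "q dvd E n \<bullet> z" using q nm by (simp add: prime_dvd_mult_iff)
  have LKSz: "\<forall>k<n. q dvd (transpose_mat W *\<^sub>v (S *\<^sub>v z)) $ k"
  proof (intro allI impI)
    fix k assume k: "k < n"
    have "q dvd E (Suc k) \<bullet> z"
    proof (cases "Suc k < n")
      case True then show ?thesis by (rule LKz)
    next
      case False
      then have "Suc k = n" using k by simp
      then show ?thesis using En by simp
    qed
    then show "q dvd (transpose_mat W *\<^sub>v (S *\<^sub>v z)) $ k" using WTSz[OF k] by simp
  qed
  have XSz: "(X *\<^sub>v (S *\<^sub>v z)) $ i = - (S *\<^sub>v (X *\<^sub>v z)) $ i" if "i < n" for i
    using XS[OF zdim] that Sc by simp
  have SXz: "q dvd (S *\<^sub>v (X *\<^sub>v z)) $ i - \<sigma> * l * (S *\<^sub>v z) $ i" if i: "i < n" for i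
  proof -
    have c2: "(\<sigma> * l) \<cdot>\<^sub>v z \<in> carrier_vec n" using zdim by simp
    have "\<forall>j<n. q dvd (X *\<^sub>v z) $ j - ((\<sigma> * l) \<cdot>\<^sub>v z) $ j" using Xz zd by simp
    then have "q dvd (S *\<^sub>v (X *\<^sub>v z)) $ i - (S *\<^sub>v ((\<sigma> * l) \<cdot>\<^sub>v z)) $ i"
      by (rule cong_mult[OF Sc Xzc c2 _ i])
    then show ?thesis using mv_smult_idx[OF Sc zdim i, of "\<sigma> * l"] by simp
  qed
  have Sz0: "\<forall>i<n. q dvd (S *\<^sub>v z) $ i"
  proof (intro allI impI)
    fix i assume i: "i < n"
    define Sz where "Sz = S *\<^sub>v z"
    define v where "v = Sz $ i0 \<cdot>\<^sub>v z - z $ i0 \<cdot>\<^sub>v Sz"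
    have Szc': "Sz \<in> carrier_vec n" using Szc unfolding Sz_def .
    have vc: "v \<in> carrier_vec n" using zdim Szc' unfolding v_def by simp
    have v_j: "v $ j = Sz $ i0 * z $ j - z $ i0 * Sz $ j" if "j < n" for j
      using that zdim Szc' unfolding v_def by simp
    have v0: "\<forall>j<n. q dvd v $ j"
    proof (intro allI impI)
      fix j assume j: "j < n"
      have "q dvd z $ j * Sz $ i0 - z $ i0 * Sz $ j"
        unfolding Sz_def by (rule kernel_minor[OF WTc zdim Szc q ndet' LKz' LKSz j i0(1)])
      moreover have "v $ j = z $ j * Sz $ i0 - z $ i0 * Sz $ j" using v_j[OF j] by (simp add: mult.commute)
      ultimately show "q dvd v $ j" by simp
    qed
    have Xv: "q dvd (X *\<^sub>v v) $ i" by (rule zero_mult[OF Xc vc v0 i])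
    have Xv_eq: "(X *\<^sub>v v) $ i = Sz $ i0 * (X *\<^sub>v z) $ i + z $ i0 * (S *\<^sub>v (X *\<^sub>v z)) $ i"
      unfolding v_def using mult_vec_lincomb[OF Xc zdim Szc' i] XSz[OF i] unfolding Sz_def by simp
    define D1 where "D1 = (X *\<^sub>v z) $ i - \<sigma> * l * z $ i"
    define D2 where "D2 = (S *\<^sub>v (X *\<^sub>v z)) $ i - \<sigma> * l * Sz $ i"
    have D1q: "q dvd D1" unfolding D1_def using Xz i by simp
    have D2q: "q dvd D2" unfolding D2_def Sz_def by (rule SXz[OF i])
    have "q dvd (X *\<^sub>v v) $ i - Sz $ i0 * D1 - z $ i0 * D2 - \<sigma> * l * v $ i"
      using Xv D1q D2q v0 i by (intro dvd_diff dvd_mult) auto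
    also have "(X *\<^sub>v v) $ i - Sz $ i0 * D1 - z $ i0 * D2 - \<sigma> * l * v $ i = 2 * (\<sigma> * (l * (z $ i0 * Sz $ i)))"
      unfolding Xv_eq D1_def D2_def v_j[OF i] by (simp add: algebra_simps)
    finally have "q dvd 2 * (\<sigma> * (l * (z $ i0 * Sz $ i)))" .
    moreover have "\<not> q dvd \<sigma>" using sig q by (auto simp: prime_int_iff)
    ultimately have "q dvd Sz $ i" using q q2 lq i0(2) by (simp add: prime_dvd_mult_iff)
    then show "q dvd (S *\<^sub>v z) $ i" unfolding Sz_def .
  qed
  define y where "y = vec n (\<lambda>i. if i = 0 then 0 else t' $ (i - 1))"
  have yc: "y \<in> carrier_vec n" unfolding y_def by simp
  have Wy: "W *\<^sub>v y = S *\<^sub>v (W *\<^sub>v t')"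
    unfolding y_def W_def W_of_def S_def by (rule walk_shift[OF skew_adj_carrier t'c n0 t'last])
  have Wt'c: "W *\<^sub>v t' \<in> carrier_vec n" using Wc t'c by simp
  have RKy: "\<forall>r<n. q dvd (W *\<^sub>v y) $ r"
  proof (intro allI impI)
    fix r assume r: "r < n"
    have c2: "c1 \<cdot>\<^sub>v z \<in> carrier_vec n" using zdim by simp
    have "\<forall>j<n. q dvd (W *\<^sub>v t') $ j - (c1 \<cdot>\<^sub>v z) $ j" using Wt' zd by simp
    then have "q dvd (S *\<^sub>v (W *\<^sub>v t')) $ r - (S *\<^sub>v (c1 \<cdot>\<^sub>v z)) $ r"
      by (rule cong_mult[OF Sc Wt'c c2 _ r])
    moreover have "(S *\<^sub>v (c1 \<cdot>\<^sub>v z)) $ r = c1 * (S *\<^sub>v z) $ r" by (rule mv_smult_idx[OF Sc zdim r])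
    moreover have "q dvd c1 * (S *\<^sub>v z) $ r" using Sz0 r by simp
    ultimately have "q dvd (S *\<^sub>v (W *\<^sub>v t')) $ r" by (metis dvd_add diff_add_cancel)
    then show "q dvd (W *\<^sub>v y) $ r" using Wy by simp
  qed
  obtain j where j: "j < n" "\<not> q dvd y $ j"
  proof (rule ccontr)
    assume "\<not> thesis"
    then have yq: "\<forall>j<n. q dvd y $ j" using that by blast
    have t'q: "\<forall>k<n. q dvd t' $ k"
    proof (intro allI impI)
      fix k assume k: "k < n"
      show "q dvd t' $ k"
      proof (cases "k = n - 1")
        case True then show ?thesis using t'last by simp
      next
        case False
        then have "k + 1 < n" using k by simp
        then have "q dvd y $ (k + 1)" using yq by simp
        then show ?thesis using \<open>k + 1 < n\<close> unfolding y_def by simp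
      qed
    qed
    have "q dvd (W *\<^sub>v t') $ i0" by (rule zero_mult[OF Wc t'c t'q i0(1)])
    then have "q dvd c1 * z $ i0" using Wt'[OF i0(1)] by (metis dvd_diff_right_iff dvd_diff)
    then show False using q c1q i0(2) by (simp add: prime_dvd_mult_iff)
  qed
  have cor: "q^2 dvd z \<bullet> (W *\<^sub>v y)"
  proof -
    define w where "w = W *\<^sub>v t'"
    have wc: "w \<in> carrier_vec n" using Wt'c unfolding w_def .
    have "(S *\<^sub>v z) \<bullet> w = - (z \<bullet> (S *\<^sub>v w))" by (rule skew_scalar[OF Sc sk zdim wc])
    then have e1: "z \<bullet> (W *\<^sub>v y) = - ((S *\<^sub>v z) \<bullet> w)" using Wy unfolding w_def by simp
    have "(S *\<^sub>v z) \<bullet> w = (\<Sum>i=0..<n. (S *\<^sub>v z) $ i * w $ i)" using wc by (simp add: scalar_prod_def)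
    also have "\<dots> = c1 * (\<Sum>i=0..<n. (S *\<^sub>v z) $ i * z $ i) + (\<Sum>i=0..<n. (S *\<^sub>v z) $ i * (w $ i - c1 * z $ i))"
      by (simp add: sum_distrib_left sum.distrib[symmetric] algebra_simps)
    also have "(\<Sum>i=0..<n. (S *\<^sub>v z) $ i * z $ i) = (S *\<^sub>v z) \<bullet> z" using zdim by (simp add: scalar_prod_def)
    also have "\<dots> = 0" by (rule skew_self[OF Sc sk zdim])
    finally have e2: "(S *\<^sub>v z) \<bullet> w = (\<Sum>i=0..<n. (S *\<^sub>v z) $ i * (w $ i - c1 * z $ i))" by simp
    have "q^2 dvd (\<Sum>i=0..<n. (S *\<^sub>v z) $ i * (w $ i - c1 * z $ i))"
    proof (rule dvd_sum)
      fix i assume "i \<in> {0..<n}"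
      then have i: "i < n" by simp
      have "q dvd (S *\<^sub>v z) $ i" using Sz0 i by simp
      moreover have "q dvd w $ i - c1 * z $ i" using Wt'[OF i] unfolding w_def .
      ultimately have "q * q dvd (S *\<^sub>v z) $ i * (w $ i - c1 * z $ i)" by (rule mult_dvd_mono)
      then show "q^2 dvd (S *\<^sub>v z) $ i * (w $ i - c1 * z $ i)" by (simp add: power2_eq_square)
    qed
    then show ?thesis using e1 e2 by simp
  qed
  have "q^2 dvd det W"
    by (rule left_right_kernel[OF Wc zdim yc q LKz' RKy i0(1) j(1) i0(2) j(2) cor])
  then show False using ndet by simp
qed

end
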